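(* In the standing setting with the noisy iteration (I)–(III), let $\kappa>1$, and let $a$, $y^{(k+1)}$ and $r^{(k+1)}$ be defined for this $\kappa$ and the given $\rho$. Then, almost surely, for every $k\ge0$, $$\|U^{(k+1)}-U^*\|_G^2\le a\|U^{(k)}-U^*\|_G^2+y^{(k+1)}\|U^{(k)}-U^*\|_G+r^{(k+1)}.$$
   Context: Standing setting. $\mathcal{G}=(\mathcal{V},\mathcal{E})$ is a connected undirected graph without self-loops on $\mathcal{V}=\{1,\dots,N\}$. Set $\mathcal{N}_i=\{j:(i,j)\in\mathcal{E}\}$ and $N_i=|\mathcal{N}_i|$. $\mathcal{A}$ is the set of directed arcs obtained by taking both orientations $(i,j)$ and $(j,i)$ of every edge of $\mathcal{E}$, so $|\mathcal{A}|=2|\mathcal{E}|$. Fix an enumeration $q=1,\dots,|\mathcal{A}|$ of $\mathcal{A}$. Each $f_i:\mathbb{R}^d\to\mathbb{R}$ is differentiable and $m_{f_i}$-strongly convex, i.e. $\langle\nabla f_i(u)-\nabla f_i(v),u-v\rangle\ge m_{f_i}\|u-v\|^2$ with $m_{f_i}>0$. Its gradient is $M_{f_i}$-Lipschitz. The function $\sum_i f_i$ has a (unique) minimizer $x^*$. For $X=(x_1,\dots,x_N)\in\mathbb{R}^{Nd}$ let $f(X)=\sum_i f_i(x_i)$, $m_f=\min_i m_{f_i}$ and $M_f=\max_i M_{f_i}$. $M_+,M_-\in\mathbb{R}^{Nd\times|\mathcal{A}|d}$ are block matrices with $d\times d$ blocks. If the $q$-th arc is $(i,j)$, then: - the $(i,q)$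 and $(j,q)$ blocks of $M_+$ are $I_d$; - the $(i,q)$ block of $M_-$ is $I_d$ and its $(j,q)$ block is $-I_d$; - all other blocks are zero. $D=\mathrm{diag}(N_1,\dots,N_N)\otimes I_d$. $\sigma_{\max}(M)$ and $\sigma_{\min}(M)$ denote the largest and the smallest nonzero singular value of a matrix $M$. $X^*=(x^*,\dots,x^* )$, $Z^*=\tfrac12M_+^TX^*$, and $\beta^*$ is the unique vector in the column space of $M_-^T$ with $\nabla f(X^* )+M_-\beta^*=0$. Set $U^*=(Z^*,\beta^* )$. For $\rho>0$, $G=\mathrm{diag}(\rho I_{|\mathcal{A}|d},\rho^{-1}I_{|\mathcal{A}|d})$ and $\|v\|_G^2=v^TGv$. Noisy iteration. Fix $\rho>0$. Let $w^{(1)},w^{(2)},\dots$ be i.i.d. $\mathcal{N}(0,I_{Nd})$, independent of a random initialization $(X^{(0)},\beta^{(0)})$ in which $\beta^{(0)}$ lies in the column space of $M_-^T$. Set $Z^{(0)}=\tfrac12M_+^TX^{(0)}$. For $k\ge0$ the random vectors $X^{(k+1)}\in\mathbb{R}^{Nd}$ and $Z^{(k+1)},\beta^{(k+1)}\in\mathbb{R}^{|\mathcal{A}|d}$ satisfy (I) $\nabla f(X^{(k+1)})+M_-\beta^{(k+1)}+\sqrt2Dw^{(k+1)}=\rho M_+(Z^{(k)}-Z^{(k+1)})$, (II) $\beta^{(k+1)}-\beta^{(k)}-\tfrac\rho2M_-^TX^{(k+1)}=0$, (III) $\tfrac12M_+^TX^{(k+1)}-Z^{(k+1)}=0$. Set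 $U^{(k)}=(Z^{(k)},\beta^{(k)})$. Constants (for given $\kappa>1$ and $\rho>0$): $$\delta=\min\Big\{\frac{(\kappa-1)\sigma_{\min}^2(M_-)}{\kappa\sigma_{\max}^2(M_+)},\ \frac{m_f}{\frac\rho4\sigma_{\max}^2(M_+)+\frac{\kappa M_f^2}{\rho\sigma_{\min}^2(M_-)}}\Big\},$$ $$a=\frac{2m_f+1}{2m_f(1+\delta)},\quad b=\frac1{2(1+\delta)},\quad c=\frac{2\sqrt2\,\delta}{(1+\delta)\sigma_{\min}^2(M_-)},\quad \tilde d=\frac{\rho\sigma_{\max}^2(M_-)}2,\quad e=\frac{2\delta}{(1+\delta)\rho\sigma_{\min}^2(M_-)}.$$ With $\bar w^{(k+1)}=\|\tfrac1{\sqrt2m_f}Dw^{(k+1)}\|+\|\sqrt2Dw^{(k+1)}\|$, define $$y^{(k+1)}=\frac{2b}{\sqrt{m_f}}\bar w^{(k+1)}+c\,\sigma_{\max}(M_-)\sqrt\rho\|Dw^{(k+1)}\|+\frac{c\tilde d}{\sqrt{m_f}}\|Dw^{(k+1)}\|,$$ $$r^{(k+1)}=\frac{\sqrt2b}{m_f}\bar w^{(k+1)}\|Dw^{(k+1)}\|+b(\bar w^{(k+1)})^2+\frac b{2m_f^2}\|Dw^{(k+1)}\|^2+\frac{\sqrt2c\tilde d}{m_f}\|Dw^{(k+1)}\|^2-e\|Dw^{(k+1)}\|^2.$$ (Here $\tilde d$ is the paper's constant "$d$", renamed to avoid a clash with the dimension $d$.) *)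

theory Defs
  imports "HOL-Probability.Probability"
begin

text \<open>Graph given by its undirected edge set E (edges are 2-element vertex sets, so no
self-loops); vertex set = UNIV of the finite type 'n. Arcs = both orientations.\<close>

definition arcs :: "'n set set \<Rightarrow> ('n \<times> 'n) set" where
  "arcs E = {(i, j). {i, j} \<in> E}"

definition nbrs :: "'n set set \<Rightarrow> 'n \<Rightarrow> 'n set" where
  "nbrs E i = {j. {i, j} \<in> E}"

definition deg :: "'n set set \<Rightarrow> 'n \<Rightarrow> nat" where
  "deg E i = card (nbrs E i)"

definition connected_graph :: "'n set set \<Rightarrow> bool" where
  "connected_graph E \<longleftrightarrow> (\<forall>i j. (i, j) \<in> (arcs E)\<^sup>*)"

definition Mplus :: "('a::finite \<Rightarrow> 'n \<times> 'n) \<Rightarrow> real^'d^'a \<Rightarrow> real^'d^'n" where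
  "Mplus ar Z = (\<chi> i. \<Sum>q\<in>UNIV. (if fst (ar q) = i \<or> snd (ar q) = i then Z $ q else 0))"

definition Mminus :: "('a::finite \<Rightarrow> 'n \<times> 'n) \<Rightarrow> real^'d^'a \<Rightarrow> real^'d^'n" where
  "Mminus ar B = (\<chi> i. \<Sum>q\<in>UNIV. (if fst (ar q) = i then B $ q
                                   else if snd (ar q) = i then - (B $ q) else 0))"

text \<open>Transposes (written out entrywise; no self-loops so fst(ar q) differs from snd(ar q)).\<close>

definition MplusT :: "('a::finite \<Rightarrow> 'n \<times> 'n) \<Rightarrow> real^'d^'n \<Rightarrow> real^'d^'a" where
  "MplusT ar X = (\<chi> q. X $ fst (ar q) + X $ snd (ar q))"

definition MminusT :: "('a::finite \<Rightarrow> 'n \<times> 'n) \<Rightarrow> real^'d^'n \<Rightarrow> real^'d^'a" where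
  "MminusT ar X = (\<chi> q. X $ fst (ar q) - X $ snd (ar q))"

definition Dmat :: "'n set set \<Rightarrow> real^'d^'n \<Rightarrow> real^'d^'n" where
  "Dmat E w = (\<chi> i. real (deg E i) *\<^sub>R w $ i)"

definition sing_vals :: "('a::euclidean_space \<Rightarrow> 'b::euclidean_space) \<Rightarrow> real set" where
  "sing_vals L = {\<sigma>. \<sigma> > 0 \<and> (\<exists>v. v \<noteq> 0 \<and> adjoint L (L v) = \<sigma>\<^sup>2 *\<^sub>R v)}"

definition sigma_max :: "('a::euclidean_space \<Rightarrow> 'b::euclidean_space) \<Rightarrow> real" where
  "sigma_max L = Max (sing_vals L)"

definition sigma_min :: "('a::euclidean_space \<Rightarrow> 'b::euclidean_space) \<Rightarrow> real" where
  "sigma_min L = Min (sing_vals L)"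

definition Gnorm :: "real \<Rightarrow> 'z::real_normed_vector \<Rightarrow> 'b::real_normed_vector \<Rightarrow> real" where
  "Gnorm \<rho> Z B = sqrt (\<rho> * (norm Z)\<^sup>2 + (norm B)\<^sup>2 / \<rho>)"

text \<open>Constants. Arguments: kappa, rho, m_f, M_f, smaxP = sigma_max(M+),
  smaxM = sigma_max(M-), sminM = sigma_min(M-).\<close>

definition cdelta :: "real \<Rightarrow> real \<Rightarrow> real \<Rightarrow> real \<Rightarrow> real \<Rightarrow> real \<Rightarrow> real" where
  "cdelta \<kappa> \<rho> mf Mf smaxP sminM =
     min ((\<kappa> - 1) * sminM\<^sup>2 / (\<kappa> * smaxP\<^sup>2))
         (mf / (\<rho> / 4 * smaxP\<^sup>2 + \<kappa> * Mf\<^sup>2 / (\<rho> * sminM\<^sup>2)))"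

definition ca :: "real \<Rightarrow> real \<Rightarrow> real" where
  "ca \<delta> mf = (2 * mf + 1) / (2 * mf * (1 + \<delta>))"

definition cb :: "real \<Rightarrow> real" where
  "cb \<delta> = 1 / (2 * (1 + \<delta>))"

definition cc :: "real \<Rightarrow> real \<Rightarrow> real" where
  "cc \<delta> sminM = 2 * sqrt 2 * \<delta> / ((1 + \<delta>) * sminM\<^sup>2)"

definition cdt :: "real \<Rightarrow> real \<Rightarrow> real" where
  "cdt \<rho> smaxM = \<rho> * smaxM\<^sup>2 / 2"

definition ce :: "real \<Rightarrow> real \<Rightarrow> real \<Rightarrow> real" where
  "ce \<delta> \<rho> sminM = 2 * \<delta> / ((1 + \<delta>) * \<rho> * sminM\<^sup>2)"

definition wbar :: "real \<Rightarrow> 'v::real_normed_vector \<Rightarrow> real" where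
  "wbar mf Dw = norm ((1 / (sqrt 2 * mf)) *\<^sub>R Dw) + norm (sqrt 2 *\<^sub>R Dw)"

text \<open>y and r, as functions of Dw = D w^(k+1).\<close>

definition ynoise :: "real \<Rightarrow> real \<Rightarrow> real \<Rightarrow> real \<Rightarrow> real \<Rightarrow> real \<Rightarrow> real \<Rightarrow> 'v::real_normed_vector \<Rightarrow> real" where
  "ynoise \<kappa> \<rho> mf Mf smaxP smaxM sminM Dw =
     (let \<delta> = cdelta \<kappa> \<rho> mf Mf smaxP sminM; b = cb \<delta>; c = cc \<delta> sminM; dt = cdt \<rho> smaxM
      in 2 * b / sqrt mf * wbar mf Dw + c * smaxM * sqrt \<rho> * norm Dw + c * dt / sqrt mf * norm Dw)"

definition rnoise :: "real \<Rightarrow> real \<Rightarrow> real \<Rightarrow> real \<Rightarrow> real \<Rightarrow> real \<Rightarrow> real \<Rightarrow> 'v::real_normed_vector \<Rightarrow> real" where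
  "rnoise \<kappa> \<rho> mf Mf smaxP smaxM sminM Dw =
     (let \<delta> = cdelta \<kappa> \<rho> mf Mf smaxP sminM; b = cb \<delta>; c = cc \<delta> sminM; dt = cdt \<rho> smaxM;
          e = ce \<delta> \<rho> sminM
      in sqrt 2 * b / mf * wbar mf Dw * norm Dw + b * (wbar mf Dw)\<^sup>2
         + b / (2 * mf\<^sup>2) * (norm Dw)\<^sup>2 + sqrt 2 * c * dt / mf * (norm Dw)\<^sup>2
         - e * (norm Dw)\<^sup>2)"

definition std_gauss_density :: "real^'d^'n \<Rightarrow> ennreal" where
  "std_gauss_density x = ennreal (\<Prod>i\<in>UNIV. \<Prod>s\<in>UNIV. std_normal_density (x $ i $ s))"

end

theory Submission
  imports Defs
begin

lemma sv_finite:
  fixes L :: "'a::euclidean_space \<Rightarrow> 'b::euclidean_space"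
  assumes lin: "linear L"
  shows "finite (sing_vals L)"
proof -
  have "\<forall>\<sigma>\<in>sing_vals L. \<exists>v. v \<noteq> 0 \<and> adjoint L (L v) = \<sigma>\<^sup>2 *\<^sub>R v"
    by (auto simp: sing_vals_def)
  then obtain V where V: "\<And>\<sigma>. \<sigma> \<in> sing_vals L \<Longrightarrow> V \<sigma> \<noteq> 0 \<and> adjoint L (L (V \<sigma>)) = \<sigma>\<^sup>2 *\<^sub>R V \<sigma>"
    by metis
  have orth: "V \<sigma> \<bullet> V \<tau> = 0" if s: "\<sigma> \<in> sing_vals L" "\<tau> \<in> sing_vals L" "\<sigma> \<noteq> \<tau>" for \<sigma> \<tau>
  proof -
    have "adjoint L (L (V \<sigma>)) \<bullet> V \<tau> = L (V \<sigma>) \<bullet> L (V \<tau>)"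
      by (simp add: adjoint_clauses(2)[OF lin])
    moreover have "V \<sigma> \<bullet> adjoint L (L (V \<tau>)) = L (V \<sigma>) \<bullet> L (V \<tau>)"
      by (simp add: adjoint_clauses(1)[OF lin])
    ultimately have "\<sigma>\<^sup>2 * (V \<sigma> \<bullet> V \<tau>) = \<tau>\<^sup>2 * (V \<sigma> \<bullet> V \<tau>)"
      using V[OF s(1)] V[OF s(2)] by simp
    moreover have "\<sigma>\<^sup>2 \<noteq> \<tau>\<^sup>2"
      using s by (auto simp: sing_vals_def power2_eq_iff)
    ultimately show ?thesis by simp
  qed
  have inj: "inj_on V (sing_vals L)"
  proof (rule inj_onI, rule ccontr)
    fix \<sigma> \<tau> assume "\<sigma> \<in> sing_vals L" "\<tau> \<in> sing_vals L" "V \<sigma> = V \<tau>" "\<sigma> \<noteq> \<tau>"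
    then have "V \<sigma> \<bullet> V \<sigma> = 0" using orth by metis
    then show False using V \<open>\<sigma> \<in> sing_vals L\<close> by simp
  qed
  have "pairwise orthogonal (V ` sing_vals L)"
    unfolding pairwise_def orthogonal_def using orth by auto
  moreover have "0 \<notin> V ` sing_vals L" using V by force
  ultimately have "independent (V ` sing_vals L)"
    by (rule pairwise_orthogonal_independent)
  then have "finite (V ` sing_vals L)" using independent_bound by blast
  then show ?thesis using inj finite_image_iff by blast
qed

lemma inner_exp: "(a + t *\<^sub>R b) \<bullet> (a + t *\<^sub>R b) = a \<bullet> a + 2 * t * (a \<bullet> b) + t\<^sup>2 * (b \<bullet> b)"
  by (simp add: inner_add_left inner_add_right inner_commute power2_eq_square algebra_simps)

lemma sv_max:
  fixes L :: "'a::euclidean_space \<Rightarrow> 'b::euclidean_space"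
  assumes lin: "linear L" and nz: "L x0 \<noteq> 0"
  shows "sing_vals L \<noteq> {}" "\<And>v. norm (L v) \<le> sigma_max L * norm v"
proof -
  have cont: "continuous_on S (\<lambda>x. (norm (L x))\<^sup>2)" for S
  proof -
    have "bounded_linear L" using lin linear_conv_bounded_linear by blast
    then show ?thesis by (intro continuous_intros linear_continuous_on)
  qed
  obtain b :: 'a where "b \<in> Basis" using nonempty_Basis by blast
  then have "b \<in> sphere 0 1" by simp
  then have "sphere (0::'a) 1 \<noteq> {}" by blast
  then obtain v0 where v0: "v0 \<in> sphere 0 1" and mx: "\<And>y. y \<in> sphere 0 1 \<Longrightarrow> (norm (L y))\<^sup>2 \<le> (norm (L v0))\<^sup>2"
    using continuous_attains_sup[OF compact_sphere _ cont] by blast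
  define lm where "lm = (norm (L v0))\<^sup>2"
  have n1: "norm v0 = 1" using v0 by simp
  have allx: "(norm (L x))\<^sup>2 \<le> lm * (norm x)\<^sup>2" for x
  proof (cases "x = 0")
    case True then show ?thesis using linear_0[OF lin] by simp
  next
    case False
    then have "(norm (L (x /\<^sub>R norm x)))\<^sup>2 \<le> lm" using mx[of "x /\<^sub>R norm x"] by (simp add: lm_def)
    moreover have "L (x /\<^sub>R norm x) = L x /\<^sub>R norm x" using linear_scale[OF lin] by simp
    ultimately have "(norm (L x))\<^sup>2 / (norm x)\<^sup>2 \<le> lm" using False
      by (simp add: power_divide power_mult_distrib divide_inverse mult.commute power_inverse)
    then show ?thesis using False by (simp add: field_simps)
  qed
  have lpos: "lm > 0"
  proof -
    have "0 < (norm (L x0))\<^sup>2" using nz by simp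
    also have "\<dots> \<le> lm * (norm x0)\<^sup>2" by (rule allx)
    finally have h: "0 < lm * (norm x0)\<^sup>2" .
    show ?thesis
    proof (rule ccontr)
      assume "\<not> lm > 0"
      then have "lm * (norm x0)\<^sup>2 \<le> 0" by (simp add: mult_nonpos_nonneg)
      then show False using h by simp
    qed
  qed
  have eig: "adjoint L (L v0) = lm *\<^sub>R v0"
  proof -
    have key: "lm * (v0 \<bullet> u) = L v0 \<bullet> L u" for u
    proof (rule ccontr)
      assume ne: "lm * (v0 \<bullet> u) \<noteq> L v0 \<bullet> L u"
      define c where "c = lm * (v0 \<bullet> u) - L v0 \<bullet> L u"
      define K where "K = lm * (norm u)\<^sup>2 - (norm (L u))\<^sup>2"
      have K0: "K \<ge> 0" using allx[of u] by (simp add: K_def)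
      have c0: "c \<noteq> 0" using ne by (simp add: c_def)
      have "2 * t * c + t\<^sup>2 * K \<ge> 0" for t
      proof -
        have "(norm (L (v0 + t *\<^sub>R u)))\<^sup>2 \<le> lm * (norm (v0 + t *\<^sub>R u))\<^sup>2" by (rule allx)
        moreover have "L (v0 + t *\<^sub>R u) = L v0 + t *\<^sub>R L u"
          using linear_add[OF lin] linear_scale[OF lin] by simp
        ultimately have "(L v0 + t *\<^sub>R L u) \<bullet> (L v0 + t *\<^sub>R L u) \<le> lm * ((v0 + t *\<^sub>R u) \<bullet> (v0 + t *\<^sub>R u))"
          by (simp add: power2_norm_eq_inner)
        then have "L v0 \<bullet> L v0 + 2 * t * (L v0 \<bullet> L u) + t\<^sup>2 * (L u \<bullet> L u) \<le> lm * (v0 \<bullet> v0 + 2 * t * (v0 \<bullet> u) + t\<^sup>2 * (u \<bullet> u))"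
          by (simp only: inner_exp)
        moreover have "L v0 \<bullet> L v0 = lm" by (simp add: lm_def power2_norm_eq_inner)
        moreover have "v0 \<bullet> v0 = 1" using n1 by (simp add: dot_square_norm)
        moreover have "2 * t * c + t\<^sup>2 * K = lm * (2 * t * (v0 \<bullet> u) + t\<^sup>2 * (u \<bullet> u)) - (2 * t * (L v0 \<bullet> L u) + t\<^sup>2 * (L u \<bullet> L u))"
          by (simp add: c_def K_def power2_norm_eq_inner algebra_simps)
        ultimately show ?thesis by (simp add: algebra_simps)
      qed
      from this[of "- c / (K + 1)"] have h: "- 2 * c\<^sup>2 / (K+1) + c\<^sup>2 * K / (K+1)\<^sup>2 \<ge> 0"
        by (simp add: power2_eq_square)
      define p where "p = c\<^sup>2 / (K+1)"
      have pp: "p > 0" using K0 c0 by (simp add: p_def)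
      have q: "K / (K+1) < 1" using K0 by simp
      have "c\<^sup>2 * K / (K+1)\<^sup>2 = p * (K / (K+1))" by (simp add: p_def power2_eq_square)
      moreover have "- 2 * c\<^sup>2 / (K+1) = - 2 * p" by (simp add: p_def)
      moreover have "p * (K / (K+1)) < p * 1" using mult_strict_left_mono[OF q pp] .
      ultimately have "- 2 * c\<^sup>2 / (K+1) + c\<^sup>2 * K / (K+1)\<^sup>2 < 0" using pp by linarith
      then show False using h by linarith
    qed
    have "(adjoint L (L v0) - lm *\<^sub>R v0) \<bullet> u = 0" for u
      using key[of u] by (simp add: inner_diff_left adjoint_clauses(2)[OF lin])
    from this[of "adjoint L (L v0) - lm *\<^sub>R v0"] show ?thesis by simp
  qed
  have mem: "sqrt lm \<in> sing_vals L"
    unfolding sing_vals_def using lpos eig n1 by (auto intro!: exI[of _ v0])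
  then show "sing_vals L \<noteq> {}" by auto
  have "sqrt lm \<le> sigma_max L"
    unfolding sigma_max_def using mem sv_finite[OF lin] by simp
  then have "lm \<le> (sigma_max L)\<^sup>2"
    using lpos by (metis real_sqrt_le_iff real_sqrt_pow2 less_imp_le power_mono real_sqrt_ge_zero)
  fix v
  have "(norm (L v))\<^sup>2 \<le> (sigma_max L)\<^sup>2 * (norm v)\<^sup>2"
    using allx[of v] \<open>lm \<le> _\<close> by (meson mult_right_mono order_trans zero_le_power2)
  then have "(norm (L v))\<^sup>2 \<le> (sigma_max L * norm v)\<^sup>2" by (simp add: power_mult_distrib)
  moreover have "sigma_max L \<ge> 0" using \<open>sqrt lm \<le> sigma_max L\<close> lpos by (meson order_trans real_sqrt_ge_zero less_imp_le)
  ultimately show "norm (L v) \<le> sigma_max L * norm v"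
    by (meson mult_nonneg_nonneg norm_ge_zero power2_le_imp_le)
qed

lemma quad_nonneg_zero:
  fixes c K :: real
  assumes h: "\<And>t. 0 \<le> 2 * t * c + t\<^sup>2 * K"
  shows "c = 0"
proof (rule ccontr)
  assume c0: "c \<noteq> 0"
  define A where "A = \<bar>K\<bar> + 1"
  have A0: "A > 0" by (simp add: A_def)
  have "0 \<le> 2 * (- c / A) * c + (- c / A)\<^sup>2 * K" by (rule h)
  also have "(- c / A)\<^sup>2 * K \<le> (- c / A)\<^sup>2 * \<bar>K\<bar>" by (simp add: mult_left_mono)
  finally have h1: "0 \<le> - 2 * (c\<^sup>2 / A) + (c\<^sup>2 / A) * (\<bar>K\<bar> / A)"
    by (simp add: power2_eq_square)
  have pp: "c\<^sup>2 / A > 0" using c0 A0 by simp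
  have q: "\<bar>K\<bar> / A < 1" using A0 by (simp add: A_def)
  have "(c\<^sup>2 / A) * (\<bar>K\<bar> / A) < (c\<^sup>2 / A) * 1" using mult_strict_left_mono[OF q pp] .
  then show False using h1 pp by linarith
qed

lemma sv_min:
  fixes L :: "'a::euclidean_space \<Rightarrow> 'b::euclidean_space"
  assumes lin: "linear L" and nz: "L x0 \<noteq> 0"
  shows "\<And>v. v \<in> range (adjoint L) \<Longrightarrow> sigma_min L * norm v \<le> norm (L v)"
    and "0 < sigma_min L"
proof -
  let ?A = "adjoint L"
  have linA: "linear ?A" by (rule adjoint_linear[OF lin])
  let ?S = "range ?A"
  have closedS: "closed ?S"
    by (rule closed_subspace, rule linear_subspace_image[OF linA subspace_UNIV])
  have cont: "continuous_on S (\<lambda>x. (norm (L x))\<^sup>2)" for S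
  proof -
    have "bounded_linear L" using lin linear_conv_bounded_linear by blast
    then show ?thesis by (intro continuous_intros linear_continuous_on)
  qed
  define w where "w = ?A (L x0)"
  have "x0 \<bullet> w = L x0 \<bullet> L x0" by (simp add: w_def adjoint_clauses(1)[OF lin])
  then have wnz: "w \<noteq> 0" using nz by auto
  have weq: "w /\<^sub>R norm w = ?A (L x0 /\<^sub>R norm w)" using linear_scale[OF linA] by (simp add: w_def)
  have m1: "w /\<^sub>R norm w \<in> sphere 0 1" using wnz by simp
  have m2: "w /\<^sub>R norm w \<in> ?S" by (subst weq) (rule rangeI)
  from m1 m2 have "w /\<^sub>R norm w \<in> sphere 0 1 \<inter> ?S" by (rule IntI)
  then have ne: "sphere 0 1 \<inter> ?S \<noteq> {}" by blast
  obtain v0 where v0: "v0 \<in> sphere 0 1 \<inter> ?S"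
    and mn: "\<And>y. y \<in> sphere 0 1 \<inter> ?S \<Longrightarrow> (norm (L v0))\<^sup>2 \<le> (norm (L y))\<^sup>2"
    using continuous_attains_inf[OF compact_Int_closed[OF compact_sphere closedS] ne cont] by blast
  define mu where "mu = (norm (L v0))\<^sup>2"
  have n1: "norm v0 = 1" using v0 by simp
  obtain y0 where y0: "v0 = ?A y0" using v0 by auto
  have inS: "?A a + t *\<^sub>R ?A b \<in> ?S" for a b t
    using linear_add[OF linA] linear_scale[OF linA] by (metis rangeI)
  have allx: "mu * (norm x)\<^sup>2 \<le> (norm (L x))\<^sup>2" if xS: "x \<in> ?S" for x
  proof (cases "x = 0")
    case True then show ?thesis using linear_0[OF lin] by simp
  next
    case False
    obtain yx where yx: "x = ?A yx" using xS by auto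
    have "x /\<^sub>R norm x = ?A (yx /\<^sub>R norm x)" using linear_scale[OF linA] yx by simp
    then have "x /\<^sub>R norm x \<in> ?S" by simp
    then have "mu \<le> (norm (L (x /\<^sub>R norm x)))\<^sup>2" using mn[of "x /\<^sub>R norm x"] False by (simp add: mu_def)
    moreover have "L (x /\<^sub>R norm x) = L x /\<^sub>R norm x" using linear_scale[OF lin] by simp
    ultimately have "mu \<le> (norm (L x))\<^sup>2 / (norm x)\<^sup>2" using False
      by (simp add: power_divide power_mult_distrib divide_inverse mult.commute power_inverse)
    then show ?thesis using False by (simp add: field_simps)
  qed
  have mupos: "mu > 0"
  proof (rule ccontr)
    assume "\<not> mu > 0"
    then have "L v0 = 0" by (simp add: mu_def)
    then have "v0 \<bullet> v0 = 0" using y0 adjoint_clauses(2)[OF lin, of y0 v0] by simp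
    then show False using n1 by simp
  qed
  have key: "mu * (v0 \<bullet> u) = L v0 \<bullet> L u" if "u \<in> ?S" for u
  proof -
    obtain yu where yu: "u = ?A yu" using \<open>u \<in> ?S\<close> by auto
    define c where "c = L v0 \<bullet> L u - mu * (v0 \<bullet> u)"
    define K where "K = (norm (L u))\<^sup>2 - mu * (norm u)\<^sup>2"
    have "0 \<le> 2 * t * c + t\<^sup>2 * K" for t
    proof -
      have "v0 + t *\<^sub>R u \<in> ?S" using inS[of y0 t yu] y0 yu by simp
      then have "mu * (norm (v0 + t *\<^sub>R u))\<^sup>2 \<le> (norm (L (v0 + t *\<^sub>R u)))\<^sup>2" by (rule allx)
      moreover have "L (v0 + t *\<^sub>R u) = L v0 + t *\<^sub>R L u"
        using linear_add[OF lin] linear_scale[OF lin] by simp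
      ultimately have "mu * ((v0 + t *\<^sub>R u) \<bullet> (v0 + t *\<^sub>R u)) \<le> (L v0 + t *\<^sub>R L u) \<bullet> (L v0 + t *\<^sub>R L u)"
        by (simp add: power2_norm_eq_inner)
      then have "mu * (v0 \<bullet> v0 + 2 * t * (v0 \<bullet> u) + t\<^sup>2 * (u \<bullet> u)) \<le> L v0 \<bullet> L v0 + 2 * t * (L v0 \<bullet> L u) + t\<^sup>2 * (L u \<bullet> L u)"
        by (simp only: inner_exp)
      moreover have "L v0 \<bullet> L v0 = mu" by (simp add: mu_def power2_norm_eq_inner)
      moreover have "v0 \<bullet> v0 = 1" using n1 by (simp add: dot_square_norm)
      moreover have "2 * t * c + t\<^sup>2 * K = (2 * t * (L v0 \<bullet> L u) + t\<^sup>2 * (L u \<bullet> L u)) - mu * (2 * t * (v0 \<bullet> u) + t\<^sup>2 * (u \<bullet> u))"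
        by (simp add: c_def K_def power2_norm_eq_inner algebra_simps)
      ultimately show ?thesis by (simp add: algebra_simps)
    qed
    then have "c = 0" by (rule quad_nonneg_zero)
    then show ?thesis by (simp add: c_def)
  qed
  define e where "e = ?A (L v0) - mu *\<^sub>R v0"
  have eS: "e \<in> ?S" using inS[of "L v0" "- mu" y0] y0 by (simp add: e_def)
  have "e \<bullet> e = 0"
    using key[OF eS] by (simp add: e_def inner_diff_left adjoint_clauses(2)[OF lin])
  then have eig: "?A (L v0) = mu *\<^sub>R v0" by (simp add: e_def)
  have mem: "sqrt mu \<in> sing_vals L"
    unfolding sing_vals_def using mupos eig n1 by (auto intro!: exI[of _ v0])
  have fin: "finite (sing_vals L)" by (rule sv_finite[OF lin])
  have sle: "sigma_min L \<le> sqrt mu"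
    unfolding sigma_min_def using mem fin by simp
  have "sigma_min L \<in> sing_vals L" unfolding sigma_min_def using mem fin Min_in by blast
  then show spos: "0 < sigma_min L" by (simp add: sing_vals_def)
  fix v assume vS: "v \<in> ?S"
  have "(sigma_min L)\<^sup>2 \<le> mu" using sle spos
    by (metis less_imp_le mupos power_mono real_sqrt_pow2)
  then have "(sigma_min L)\<^sup>2 * (norm v)\<^sup>2 \<le> mu * (norm v)\<^sup>2" by (simp add: mult_right_mono)
  also have "\<dots> \<le> (norm (L v))\<^sup>2" by (rule allx[OF vS])
  finally have "(sigma_min L * norm v)\<^sup>2 \<le> (norm (L v))\<^sup>2" by (simp add: power_mult_distrib)
  then show "sigma_min L * norm v \<le> norm (L v)"
    by (meson norm_ge_zero power2_le_imp_le)
qed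

lemma Gnorm_pair:
  assumes "\<rho> > 0"
  shows "Gnorm \<rho> Z B = norm (sqrt \<rho> *\<^sub>R Z, B /\<^sub>R sqrt \<rho>)"
  using assms by (simp add: Gnorm_def norm_Pair power_mult_distrib power_divide power_inverse divide_inverse mult.commute)

lemma Gnorm_sq:
  assumes "\<rho> > 0"
  shows "(Gnorm \<rho> Z B)\<^sup>2 = \<rho> * (norm Z)\<^sup>2 + (norm B)\<^sup>2 / \<rho>"
proof -
  have "0 \<le> \<rho> * (norm Z)\<^sup>2" "0 \<le> (norm B)\<^sup>2 / \<rho>" using assms by simp_all
  then have "0 \<le> \<rho> * (norm Z)\<^sup>2 + (norm B)\<^sup>2 / \<rho>" by linarith
  then show ?thesis by (simp add: Gnorm_def)
qed

lemma Gnorm_nonneg: "\<rho> > 0 \<Longrightarrow> Gnorm \<rho> Z B \<ge> 0"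
  by (simp add: Gnorm_pair)

lemma Gnorm_triangle:
  assumes "\<rho> > 0"
  shows "Gnorm \<rho> (Z1 + Z2) (B1 + B2) \<le> Gnorm \<rho> Z1 B1 + Gnorm \<rho> Z2 B2"
proof -
  have eq: "(sqrt \<rho> *\<^sub>R (Z1 + Z2), (B1 + B2) /\<^sub>R sqrt \<rho>) =
        (sqrt \<rho> *\<^sub>R Z1, B1 /\<^sub>R sqrt \<rho>) + (sqrt \<rho> *\<^sub>R Z2, B2 /\<^sub>R sqrt \<rho>)"
    by (simp add: scaleR_add_right)
  have "Gnorm \<rho> (Z1 + Z2) (B1 + B2) = norm ((sqrt \<rho> *\<^sub>R Z1, B1 /\<^sub>R sqrt \<rho>) + (sqrt \<rho> *\<^sub>R Z2, B2 /\<^sub>R sqrt \<rho>))"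
    using Gnorm_pair[OF assms] eq by metis
  also have "\<dots> \<le> norm (sqrt \<rho> *\<^sub>R Z1, B1 /\<^sub>R sqrt \<rho>) + norm (sqrt \<rho> *\<^sub>R Z2, B2 /\<^sub>R sqrt \<rho>)"
    by (rule norm_triangle_ineq)
  finally show ?thesis using Gnorm_pair[OF assms] by metis
qed

lemma young_scalar:
  fixes k a b :: real
  assumes k: "k > 1"
  shows "(a + b)\<^sup>2 \<le> k / (k - 1) * a\<^sup>2 + k * b\<^sup>2"
proof -
  have "(k - 1) * (k / (k - 1) * a\<^sup>2 + k * b\<^sup>2 - (a + b)\<^sup>2) = (a - (k - 1) * b)\<^sup>2"
    using k by (simp add: field_simps power2_eq_square)
  then have "(k - 1) * (k / (k - 1) * a\<^sup>2 + k * b\<^sup>2 - (a + b)\<^sup>2) \<ge> 0" by simp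
  then show ?thesis using k by (simp add: zero_le_mult_iff)
qed

lemma young_vec:
  fixes x y :: "'a::real_normed_vector"
  assumes k: "k > 1"
  shows "(norm (x - y))\<^sup>2 \<le> k / (k - 1) * (norm x)\<^sup>2 + k * (norm y)\<^sup>2"
proof -
  have "norm (x - y) \<le> norm x + norm y" by (rule norm_triangle_ineq4)
  then have "(norm (x - y))\<^sup>2 \<le> (norm x + norm y)\<^sup>2" by (simp add: power_mono)
  also have "\<dots> \<le> k / (k - 1) * (norm x)\<^sup>2 + k * (norm y)\<^sup>2" by (rule young_scalar[OF k])
  finally show ?thesis .
qed

lemma exists_sol:
  fixes P Q :: "'z::euclidean_space \<Rightarrow> 'x::euclidean_space" and Pt Qt :: "'x \<Rightarrow> 'z"
    and G :: "'x \<Rightarrow> 'x"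
  assumes linP: "linear P" and linQ: "linear Q" and linPt: "linear Pt" and linQt: "linear Qt"
    and adjP: "\<And>z x. P z \<bullet> x = z \<bullet> Pt x" and adjQ: "\<And>z x. Q z \<bullet> x = z \<bullet> Qt x"
    and mono: "\<And>x y. mf * (norm (x - y))\<^sup>2 \<le> (G x - G y) \<bullet> (x - y)"
    and lipG: "\<And>x y. norm (G x - G y) \<le> Mf * norm (x - y)"
    and mf: "mf > 0" and rho: "\<rho> > 0"
  shows "\<exists>X. G X + (\<rho>/2) *\<^sub>R (Q (Qt X) + P (Pt X)) = c"
proof -
  define H where "H X = Q (Qt X) + P (Pt X)" for X
  have linH: "linear H"
    unfolding linear_iff H_def
    by (simp add: linear_add[OF linP] linear_add[OF linQ] linear_add[OF linPt] linear_add[OF linQt]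
        linear_scale[OF linP] linear_scale[OF linQ] linear_scale[OF linPt] linear_scale[OF linQt]
        scaleR_add_right)
  obtain B where B: "B > 0" "\<And>x. norm (H x) \<le> B * norm x" using linear_bounded_pos[OF linH] by blast
  define F where "F X = G X + (\<rho>/2) *\<^sub>R H X" for X
  define Lc where "Lc = \<bar>Mf\<bar> + \<rho>/2 * B + mf"
  have "\<rho> * B > 0" using B rho by simp
  then have Lc: "Lc \<ge> mf" "Lc > 0" using mf by (simp_all add: Lc_def)
  have Hd: "H x - H y = H (x - y)" for x y using linear_diff[OF linH] by simp
  have Fd: "F x - F y = (G x - G y) + (\<rho>/2) *\<^sub>R H (x - y)" for x y
    by (simp add: F_def Hd[symmetric] algebra_simps)
  have Hpos: "H d \<bullet> d \<ge> 0" for d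
    by (simp add: H_def inner_add_left adjP adjQ)
  have Fmono: "mf * (norm (x - y))\<^sup>2 \<le> (F x - F y) \<bullet> (x - y)" for x y
  proof -
    have "(F x - F y) \<bullet> (x - y) = (G x - G y) \<bullet> (x - y) + (\<rho>/2) * (H (x - y) \<bullet> (x - y))"
      by (simp add: Fd inner_add_left)
    moreover have "(\<rho>/2) * (H (x - y) \<bullet> (x - y)) \<ge> 0" using rho Hpos by simp
    ultimately show ?thesis using mono[of x y] by linarith
  qed
  have Flip: "norm (F x - F y) \<le> Lc * norm (x - y)" for x y
  proof -
    have "norm (F x - F y) \<le> norm (G x - G y) + norm ((\<rho>/2) *\<^sub>R H (x - y))"
      unfolding Fd by (rule norm_triangle_ineq)
    also have "norm ((\<rho>/2) *\<^sub>R H (x - y)) = \<rho>/2 * norm (H (x - y))" using rho by simp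
    also have "\<rho>/2 * norm (H (x - y)) \<le> \<rho>/2 * (B * norm (x - y))"
      using B(2) rho by (simp add: mult_left_mono)
    finally have "norm (F x - F y) \<le> Mf * norm (x - y) + \<rho>/2 * (B * norm (x - y))"
      using lipG[of x y] by linarith
    also have "\<dots> \<le> Lc * norm (x - y)"
    proof -
      have "Mf * norm (x - y) \<le> \<bar>Mf\<bar> * norm (x - y)" by (simp add: mult_right_mono)
      moreover have "0 \<le> mf * norm (x - y)" using mf by simp
      ultimately show ?thesis by (simp add: Lc_def algebra_simps)
    qed
    finally show ?thesis .
  qed
  define t where "t = mf / Lc\<^sup>2"
  define q where "q = 1 - mf\<^sup>2 / Lc\<^sup>2"
  have tpos: "t > 0" using mf Lc by (simp add: t_def)
  have q0: "0 \<le> q"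
  proof -
    have "mf\<^sup>2 \<le> Lc\<^sup>2" using Lc mf by (simp add: power_mono)
    then show ?thesis using Lc by (simp add: q_def)
  qed
  have q1: "q < 1" using mf Lc by (simp add: q_def)
  define \<Phi> where "\<Phi> x = x - t *\<^sub>R (F x - c)" for x
  have contr: "dist (\<Phi> x) (\<Phi> y) \<le> sqrt q * dist x y" for x y
  proof -
    define d where "d = x - y"
    define e where "e = F x - F y"
    have "\<Phi> x - \<Phi> y = d - t *\<^sub>R e" by (simp add: \<Phi>_def d_def e_def algebra_simps)
    then have "(norm (\<Phi> x - \<Phi> y))\<^sup>2 = (d - t *\<^sub>R e) \<bullet> (d - t *\<^sub>R e)"
      by (simp add: power2_norm_eq_inner)
    also have "\<dots> = d \<bullet> d - 2 * t * (e \<bullet> d) + t\<^sup>2 * (e \<bullet> e)"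
      by (simp add: inner_diff_left inner_diff_right inner_commute power2_eq_square algebra_simps)
    also have "\<dots> \<le> d \<bullet> d - 2 * t * (mf * (d \<bullet> d)) + t\<^sup>2 * (Lc\<^sup>2 * (d \<bullet> d))"
    proof -
      have "mf * (d \<bullet> d) \<le> e \<bullet> d" using Fmono[of x y] by (simp add: d_def e_def power2_norm_eq_inner)
      then have a: "2 * t * (mf * (d \<bullet> d)) \<le> 2 * t * (e \<bullet> d)" using tpos by simp
      have "(norm e)\<^sup>2 \<le> (Lc * norm d)\<^sup>2" using Flip[of x y] by (simp add: d_def e_def power_mono)
      then have "e \<bullet> e \<le> Lc\<^sup>2 * (d \<bullet> d)" by (simp add: power2_norm_eq_inner power_mult_distrib)
      then have b: "t\<^sup>2 * (e \<bullet> e) \<le> t\<^sup>2 * (Lc\<^sup>2 * (d \<bullet> d))" by (simp add: mult_left_mono)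
      from a b show ?thesis by linarith
    qed
    also have "\<dots> = q * (d \<bullet> d)"
      using Lc by (simp add: t_def q_def field_simps power2_eq_square)
    finally have "(dist (\<Phi> x) (\<Phi> y))\<^sup>2 \<le> (sqrt q * dist x y)\<^sup>2"
      using q0 by (simp add: dist_norm d_def power_mult_distrib power2_norm_eq_inner)
    then show ?thesis using q0 by (meson mult_nonneg_nonneg real_sqrt_ge_zero zero_le_dist power2_le_imp_le)
  qed
  have "\<exists>!x. \<Phi> x = x"
    by (rule banach_fix_type[of "sqrt q"]) (use q0 q1 contr in auto)
  then obtain x where "\<Phi> x = x" by blast
  then have "t *\<^sub>R (F x - c) = 0" by (simp add: \<Phi>_def)
  then have "F x = c" using tpos by simp
  then show ?thesis by (auto simp: F_def H_def)
qed

lemma sq_le: "0 \<le> a \<Longrightarrow> a \<le> b \<Longrightarrow> a\<^sup>2 \<le> (b::real)\<^sup>2"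
  by (rule power_mono)

lemma contraction:
  fixes P Q :: "'z::euclidean_space \<Rightarrow> 'x::euclidean_space" and Pt Qt :: "'x \<Rightarrow> 'z"
    and G :: "'x \<Rightarrow> 'x"
  assumes linP: "linear P" and linQ: "linear Q" and linPt: "linear Pt" and linQt: "linear Qt"
    and adjP: "\<And>z x. P z \<bullet> x = z \<bullet> Pt x" and adjQ: "\<And>z x. Q z \<bullet> x = z \<bullet> Qt x"
    and mono: "\<And>x y. mf * (norm (x - y))\<^sup>2 \<le> (G x - G y) \<bullet> (x - y)"
    and lipG: "\<And>x y. norm (G x - G y) \<le> Mf * norm (x - y)"
    and rho: "\<rho> > 0" and kappa: "\<kappa> > 1" and sm: "sm > 0"
    and nP: "\<And>z. norm (P z) \<le> sP * norm z" and nPt: "\<And>x. norm (Pt x) \<le> sP * norm x"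
    and nQ: "\<And>v. v \<in> range Qt \<Longrightarrow> sm * norm v \<le> norm (Q v)"
    and d0: "\<delta> \<ge> 0" and d1: "\<delta> * \<kappa> * sP\<^sup>2 \<le> (\<kappa> - 1) * sm\<^sup>2"
    and d2: "\<delta> * (\<rho>/4 * sP\<^sup>2 + \<kappa> * Mf\<^sup>2 / (\<rho> * sm\<^sup>2)) \<le> mf"
    and Xs: "Qt Xs = 0" and opt: "G Xs + Q bs = 0" and Zs: "Zs = (1/2) *\<^sub>R Pt Xs"
    and bk: "bk - bs \<in> range Qt"
    and I: "G X1 + Q b1 = \<rho> *\<^sub>R P (Zk - Z1)"
    and II: "b1 = bk + (\<rho>/2) *\<^sub>R Qt X1" and III: "Z1 = (1/2) *\<^sub>R Pt X1"
  shows "(1 + \<delta>) * (\<rho> * (norm (Z1 - Zs))\<^sup>2 + (norm (b1 - bs))\<^sup>2 / \<rho>)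
         \<le> \<rho> * (norm (Zk - Zs))\<^sup>2 + (norm (bk - bs))\<^sup>2 / \<rho>"
proof -
  define d where "d = X1 - Xs"
  define g where "g = G X1 - G Xs"
  define a1 where "a1 = Zk - Z1"
  define a2 where "a2 = Z1 - Zs"
  define e1 where "e1 = bk - b1"
  define e2 where "e2 = b1 - bs"
  have eq1: "g + Q e2 = \<rho> *\<^sub>R P a1"
  proof -
    have "Q e2 = Q b1 - Q bs" by (simp add: e2_def linear_diff[OF linQ])
    have gx: "G Xs = - Q bs" using opt by (simp add: eq_neg_iff_add_eq_0)
    have "g + Q e2 = (G X1 + Q b1) - (G Xs + Q bs)"
      using \<open>Q e2 = Q b1 - Q bs\<close> by (simp add: g_def algebra_simps)
    then show ?thesis using I opt by (simp add: a1_def)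
  qed
  have eq2: "Qt d = (2/\<rho>) *\<^sub>R (- e1)"
    using rho II Xs by (simp add: d_def e1_def linear_diff[OF linQt])
  have eq3: "Pt d = 2 *\<^sub>R a2"
    using III Zs by (simp add: d_def a2_def linear_diff[OF linPt] algebra_simps)
  have inner1: "g \<bullet> d + e2 \<bullet> Qt d = \<rho> * (a1 \<bullet> Pt d)"
  proof -
    have "(g + Q e2) \<bullet> d = (\<rho> *\<^sub>R P a1) \<bullet> d" using eq1 by simp
    then show ?thesis by (simp add: inner_add_left adjP adjQ)
  qed
  then have inner2: "g \<bullet> d = 2 * \<rho> * (a1 \<bullet> a2) + (2/\<rho>) * (e1 \<bullet> e2)"
    using eq2 eq3 by (simp add: inner_commute)
  have pol1: "(norm (Zk - Zs))\<^sup>2 = (norm a1)\<^sup>2 + 2 * (a1 \<bullet> a2) + (norm a2)\<^sup>2"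
  proof -
    have "Zk - Zs = a1 + a2" by (simp add: a1_def a2_def)
    then show ?thesis by (simp add: power2_norm_eq_inner inner_add_left inner_add_right inner_commute)
  qed
  have pol2: "(norm (bk - bs))\<^sup>2 = (norm e1)\<^sup>2 + 2 * (e1 \<bullet> e2) + (norm e2)\<^sup>2"
  proof -
    have "bk - bs = e1 + e2" by (simp add: e1_def e2_def)
    then show ?thesis by (simp add: power2_norm_eq_inner inner_add_left inner_add_right inner_commute)
  qed
  define u2 where "u2 = \<rho> * (norm (Zk - Zs))\<^sup>2 + (norm (bk - bs))\<^sup>2 / \<rho>"
  define g1 where "g1 = \<rho> * (norm a2)\<^sup>2 + (norm e2)\<^sup>2 / \<rho>"
  have ident: "g1 = u2 - \<rho> * (norm a1)\<^sup>2 - (norm e1)\<^sup>2 / \<rho> - g \<bullet> d"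
    unfolding g1_def u2_def inner2 pol1 pol2 using rho
    by (simp add: field_simps)
  have gd: "g \<bullet> d \<ge> mf * (norm d)\<^sup>2" using mono[of X1 Xs] by (simp add: g_def d_def)
  have ng: "norm g \<le> Mf * norm d" using lipG[of X1 Xs] by (simp add: g_def d_def)
  have a2b: "(norm a2)\<^sup>2 \<le> sP\<^sup>2 / 4 * (norm d)\<^sup>2"
  proof -
    have "norm (2 *\<^sub>R a2) \<le> sP * norm d" using nPt[of d] eq3 by simp
    then have "2 * norm a2 \<le> sP * norm d" by simp
    then have "(2 * norm a2)\<^sup>2 \<le> (sP * norm d)\<^sup>2" by (intro sq_le) simp_all
    then show ?thesis by (simp add: power_mult_distrib)
  qed
  have e2range: "e2 \<in> range Qt"
  proof -
    obtain y where y: "bk - bs = Qt y" using bk by auto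
    have "e2 = Qt (y + (\<rho>/2) *\<^sub>R X1)"
      using y II by (simp add: e2_def linear_add[OF linQt] linear_scale[OF linQt] algebra_simps)
    then show ?thesis by simp
  qed
  have Qe2: "Q e2 = \<rho> *\<^sub>R P a1 - g" using eq1 by (simp add: algebra_simps)
  have e2b: "sm\<^sup>2 * (norm e2)\<^sup>2 \<le> \<kappa> / (\<kappa> - 1) * (\<rho>\<^sup>2 * sP\<^sup>2 * (norm a1)\<^sup>2) + \<kappa> * (Mf\<^sup>2 * (norm d)\<^sup>2)"
  proof -
    have s1: "(sm * norm e2)\<^sup>2 \<le> (norm (Q e2))\<^sup>2"
      using nQ[OF e2range] sm by (intro sq_le) simp_all
    have s2: "(norm (Q e2))\<^sup>2 \<le> \<kappa> / (\<kappa> - 1) * (norm (\<rho> *\<^sub>R P a1))\<^sup>2 + \<kappa> * (norm g)\<^sup>2"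
      unfolding Qe2 by (rule young_vec[OF kappa])
    have s3: "(norm (\<rho> *\<^sub>R P a1))\<^sup>2 \<le> \<rho>\<^sup>2 * sP\<^sup>2 * (norm a1)\<^sup>2"
    proof -
      have "norm (\<rho> *\<^sub>R P a1) \<le> \<rho> * (sP * norm a1)" using nP[of a1] rho by (simp add: mult_left_mono)
      then have "(norm (\<rho> *\<^sub>R P a1))\<^sup>2 \<le> (\<rho> * (sP * norm a1))\<^sup>2" by (intro sq_le) simp_all
      then show ?thesis by (simp add: power_mult_distrib)
    qed
    have s4: "(norm g)\<^sup>2 \<le> Mf\<^sup>2 * (norm d)\<^sup>2"
    proof -
      have "(norm g)\<^sup>2 \<le> (Mf * norm d)\<^sup>2" using ng by (intro sq_le) simp_all
      then show ?thesis by (simp add: power_mult_distrib)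
    qed
    have k1: "\<kappa> / (\<kappa> - 1) \<ge> 0" "\<kappa> \<ge> 0" using kappa by simp_all
    have "\<kappa> / (\<kappa> - 1) * (norm (\<rho> *\<^sub>R P a1))\<^sup>2 \<le> \<kappa> / (\<kappa> - 1) * (\<rho>\<^sup>2 * sP\<^sup>2 * (norm a1)\<^sup>2)"
      using s3 k1 by (intro mult_left_mono) simp_all
    moreover have "\<kappa> * (norm g)\<^sup>2 \<le> \<kappa> * (Mf\<^sup>2 * (norm d)\<^sup>2)"
      using s4 k1 by (intro mult_left_mono) simp_all
    moreover have "(sm * norm e2)\<^sup>2 = sm\<^sup>2 * (norm e2)\<^sup>2" by (simp add: power_mult_distrib)
    ultimately show ?thesis using s1 s2 by linarith
  qed
  define A where "A = (norm a1)\<^sup>2"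
  define D where "D = (norm d)\<^sup>2"
  define E where "E = (norm e2)\<^sup>2"
  define Z2 where "Z2 = (norm a2)\<^sup>2"
  have A0: "A \<ge> 0" and D0: "D \<ge> 0" by (simp_all add: A_def D_def)
  define R where "R = \<kappa> / (\<kappa> - 1) * (\<rho>\<^sup>2 * sP\<^sup>2 * A) + \<kappa> * (Mf\<^sup>2 * D)"
  have smE: "sm\<^sup>2 * E \<le> R" using e2b by (simp add: R_def A_def D_def E_def)
  have f0: "\<delta> / (\<rho> * sm\<^sup>2) \<ge> 0" using d0 rho sm by simp
  have "\<delta> * E / \<rho> = \<delta> / (\<rho> * sm\<^sup>2) * (sm\<^sup>2 * E)" using rho sm by (simp add: field_simps)
  also have "\<dots> \<le> \<delta> / (\<rho> * sm\<^sup>2) * R" using smE f0 by (rule mult_left_mono)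
  also have "\<dots> = (\<delta> * \<kappa> * sP\<^sup>2 / ((\<kappa> - 1) * sm\<^sup>2)) * (\<rho> * A) + (\<delta> * \<kappa> * Mf\<^sup>2 / (\<rho> * sm\<^sup>2)) * D"
    using rho sm kappa by (simp add: R_def field_simps power2_eq_square)
  finally have t1: "\<delta> * E / \<rho> \<le> (\<delta> * \<kappa> * sP\<^sup>2 / ((\<kappa> - 1) * sm\<^sup>2)) * (\<rho> * A) + (\<delta> * \<kappa> * Mf\<^sup>2 / (\<rho> * sm\<^sup>2)) * D" .
  have c1: "\<delta> * \<kappa> * sP\<^sup>2 / ((\<kappa> - 1) * sm\<^sup>2) \<le> 1"
    using d1 kappa sm by (simp add: pos_divide_le_eq)
  have t2: "(\<delta> * \<kappa> * sP\<^sup>2 / ((\<kappa> - 1) * sm\<^sup>2)) * (\<rho> * A) \<le> \<rho> * A"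
    using mult_right_mono[OF c1, of "\<rho> * A"] rho A0 by simp
  have t3: "\<delta> * \<rho> * Z2 \<le> \<delta> * \<rho> * (sP\<^sup>2 / 4 * D)"
  proof -
    have "\<delta> * \<rho> \<ge> 0" using d0 rho by simp
    from mult_left_mono[OF a2b this] show ?thesis by (simp add: Z2_def D_def)
  qed
  have t4: "\<delta> * (\<rho>/4 * sP\<^sup>2 + \<kappa> * Mf\<^sup>2 / (\<rho> * sm\<^sup>2)) * D \<le> mf * D"
    using mult_right_mono[OF d2 D0] .
  have t5: "\<delta> * (\<rho>/4 * sP\<^sup>2 + \<kappa> * Mf\<^sup>2 / (\<rho> * sm\<^sup>2)) * D = \<delta> * \<rho> * (sP\<^sup>2 / 4 * D) + (\<delta> * \<kappa> * Mf\<^sup>2 / (\<rho> * sm\<^sup>2)) * D"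
    by (simp add: algebra_simps)
  have gdD: "g \<bullet> d \<ge> mf * D" using gd by (simp add: D_def)
  have e1pos: "(norm e1)\<^sup>2 / \<rho> \<ge> 0" using rho by simp
  have g1eq: "(1 + \<delta>) * g1 = g1 + \<delta> * \<rho> * Z2 + \<delta> * E / \<rho>"
    by (simp add: g1_def Z2_def E_def algebra_simps add_divide_distrib)
  have "(1 + \<delta>) * g1 \<le> u2"
    using g1eq ident t1 t2 t3 t4 t5 gdD e1pos by (simp add: A_def)
  then show ?thesis by (simp add: g1_def u2_def a2_def e2_def)
qed

lemma perturb:
  fixes P Q :: "'z::euclidean_space \<Rightarrow> 'x::euclidean_space" and Pt Qt :: "'x \<Rightarrow> 'z"
    and G :: "'x \<Rightarrow> 'x"
  assumes linP: "linear P" and linQ: "linear Q" and linPt: "linear Pt" and linQt: "linear Qt"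
    and adjP: "\<And>z x. P z \<bullet> x = z \<bullet> Pt x" and adjQ: "\<And>z x. Q z \<bullet> x = z \<bullet> Qt x"
    and mono: "\<And>x y. mf * (norm (x - y))\<^sup>2 \<le> (G x - G y) \<bullet> (x - y)"
    and rho: "\<rho> > 0" and mf: "mf > 0"
    and I1: "G X1 + Q b1 + n = \<rho> *\<^sub>R P (Zk - Z1)"
    and II1: "b1 = bk + (\<rho>/2) *\<^sub>R Qt X1" and III1: "Z1 = (1/2) *\<^sub>R Pt X1"
    and I2: "G X2 + Q b2 = \<rho> *\<^sub>R P (Zk - Z2)"
    and II2: "b2 = bk + (\<rho>/2) *\<^sub>R Qt X2" and III2: "Z2 = (1/2) *\<^sub>R Pt X2"
  shows "\<rho> * (norm (Z1 - Z2))\<^sup>2 + (norm (b1 - b2))\<^sup>2 / \<rho> \<le> (norm n)\<^sup>2 / (8 * mf)"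
proof -
  define e where "e = X1 - X2"
  have db: "b1 - b2 = (\<rho>/2) *\<^sub>R Qt e"
    using II1 II2 by (simp add: e_def linear_diff[OF linQt] scaleR_diff_right)
  have dz: "Z1 - Z2 = (1/2) *\<^sub>R Pt e"
    using III1 III2 by (simp add: e_def linear_diff[OF linPt] scaleR_diff_right)
  have "(G X1 + Q b1 + n) - (G X2 + Q b2) = \<rho> *\<^sub>R (P (Zk - Z1) - P (Zk - Z2))"
    using I1 I2 by (simp add: scaleR_diff_right)
  also have "P (Zk - Z1) - P (Zk - Z2) = - P (Z1 - Z2)"
    by (simp add: linear_diff[OF linP, symmetric] linear_neg[OF linP, symmetric])
  finally have eq: "(G X1 - G X2) + Q (b1 - b2) + n = - (\<rho> *\<^sub>R P (Z1 - Z2))"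
    by (simp add: linear_diff[OF linQ] algebra_simps)
  have "((G X1 - G X2) + Q (b1 - b2) + n) \<bullet> e = - (\<rho> *\<^sub>R P (Z1 - Z2)) \<bullet> e"
    using eq by simp
  then have h0: "(G X1 - G X2) \<bullet> e + (b1 - b2) \<bullet> Qt e + n \<bullet> e = - \<rho> * ((Z1 - Z2) \<bullet> Pt e)"
    by (simp add: inner_add_left adjP adjQ)
  define qe where "qe = (norm (Qt e))\<^sup>2"
  define pe where "pe = (norm (Pt e))\<^sup>2"
  define x where "x = norm e"
  define N where "N = norm n"
  have h: "\<rho>/2 * qe + \<rho>/2 * pe = - (n \<bullet> e) - (G X1 - G X2) \<bullet> e"
    using h0 by (simp add: db dz qe_def pe_def power2_norm_eq_inner algebra_simps)
  have ne: "- (n \<bullet> e) \<le> N * x"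
    using norm_cauchy_schwarz[of "-n" e] by (simp add: N_def x_def)
  have gd: "(G X1 - G X2) \<bullet> e \<ge> mf * x\<^sup>2" using mono[of X1 X2] by (simp add: e_def x_def)
  have sq: "4 * mf * (N * x - mf * x\<^sup>2) \<le> N\<^sup>2"
  proof -
    have "0 \<le> (N - 2 * mf * x)\<^sup>2" by simp
    then show ?thesis by (simp add: power2_eq_square algebra_simps)
  qed
  have lhs: "\<rho> * (norm (Z1 - Z2))\<^sup>2 + (norm (b1 - b2))\<^sup>2 / \<rho> = \<rho> / 4 * (pe + qe)"
    using rho by (simp add: db dz pe_def qe_def power_mult_distrib power2_eq_square field_simps)
  have "\<rho>/2 * qe + \<rho>/2 * pe \<le> N * x - mf * x\<^sup>2" using h ne gd by linarith
  then have "4 * mf * (\<rho>/2 * qe + \<rho>/2 * pe) \<le> 4 * mf * (N * x - mf * x\<^sup>2)"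
    using mf by (simp add: mult_left_mono)
  then have "4 * mf * (\<rho>/2 * qe + \<rho>/2 * pe) \<le> N\<^sup>2" using sq by linarith
  then have "\<rho> / 4 * (pe + qe) \<le> N\<^sup>2 / (8 * mf)"
    using mf by (simp add: field_simps)
  then show ?thesis using lhs by (simp add: N_def)
qed

lemma sq_le_imp_le: "0 \<le> b \<Longrightarrow> a\<^sup>2 \<le> b\<^sup>2 \<Longrightarrow> a \<le> (b::real)"
  by (rule power2_le_imp_le)

lemma core:
  fixes P Q :: "'z::euclidean_space \<Rightarrow> 'x::euclidean_space" and Pt Qt :: "'x \<Rightarrow> 'z"
    and G :: "'x \<Rightarrow> 'x"
  assumes linP: "linear P" and linQ: "linear Q" and linPt: "linear Pt" and linQt: "linear Qt"
    and adjP: "\<And>z x. P z \<bullet> x = z \<bullet> Pt x" and adjQ: "\<And>z x. Q z \<bullet> x = z \<bullet> Qt x"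
    and mono: "\<And>x y. mf * (norm (x - y))\<^sup>2 \<le> (G x - G y) \<bullet> (x - y)"
    and lipG: "\<And>x y. norm (G x - G y) \<le> Mf * norm (x - y)"
    and mf: "mf > 0" and rho: "\<rho> > 0" and kappa: "\<kappa> > 1" and sm: "sm > 0"
    and nP: "\<And>z. norm (P z) \<le> sP * norm z" and nPt: "\<And>x. norm (Pt x) \<le> sP * norm x"
    and nQ: "\<And>v. v \<in> range Qt \<Longrightarrow> sm * norm v \<le> norm (Q v)"
    and d0: "\<delta> \<ge> 0" and d1: "\<delta> * \<kappa> * sP\<^sup>2 \<le> (\<kappa> - 1) * sm\<^sup>2"
    and d2: "\<delta> * (\<rho>/4 * sP\<^sup>2 + \<kappa> * Mf\<^sup>2 / (\<rho> * sm\<^sup>2)) \<le> mf"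
    and Xs: "Qt Xs = 0" and opt: "G Xs + Q bs = 0" and Zs: "Zs = (1/2) *\<^sub>R Pt Xs"
    and bk: "bk - bs \<in> range Qt"
    and I: "G X1 + Q b1 + n = \<rho> *\<^sub>R P (Zk - Z1)"
    and II: "b1 = bk + (\<rho>/2) *\<^sub>R Qt X1" and III: "Z1 = (1/2) *\<^sub>R Pt X1"
  shows "Gnorm \<rho> (Z1 - Zs) (b1 - bs)
         \<le> Gnorm \<rho> (Zk - Zs) (bk - bs) / sqrt (1 + \<delta>) + norm n / (2 * sqrt 2 * sqrt mf)"
proof -
  obtain Xt where Xt: "G Xt + (\<rho>/2) *\<^sub>R (Q (Qt Xt) + P (Pt Xt)) = \<rho> *\<^sub>R P Zk - Q bk"
    using exists_sol[OF linP linQ linPt linQt adjP adjQ mono lipG mf rho] by blast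
  define bt where "bt = bk + (\<rho>/2) *\<^sub>R Qt Xt"
  define Zt where "Zt = (1/2) *\<^sub>R Pt Xt"
  have It: "G Xt + Q bt = \<rho> *\<^sub>R P (Zk - Zt)"
  proof -
    have Qbt: "Q bt = Q bk + (\<rho>/2) *\<^sub>R Q (Qt Xt)"
      by (simp add: bt_def linear_add[OF linQ] linear_scale[OF linQ])
    have e1: "\<rho> *\<^sub>R P (Zk - Zt) = \<rho> *\<^sub>R P Zk - (\<rho>/2) *\<^sub>R P (Pt Xt)"
      by (simp add: Zt_def linear_diff[OF linP] linear_scale[OF linP] scaleR_diff_right)
    have e2: "\<rho> *\<^sub>R P Zk = G Xt + (\<rho>/2) *\<^sub>R (Q (Qt Xt) + P (Pt Xt)) + Q bk"
      using Xt by (simp add: eq_diff_eq)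
    show ?thesis unfolding Qbt e1 e2 by (simp add: scaleR_add_right)
  qed
  have C: "(1 + \<delta>) * (\<rho> * (norm (Zt - Zs))\<^sup>2 + (norm (bt - bs))\<^sup>2 / \<rho>)
         \<le> \<rho> * (norm (Zk - Zs))\<^sup>2 + (norm (bk - bs))\<^sup>2 / \<rho>"
    by (rule contraction[OF linP linQ linPt linQt adjP adjQ mono lipG rho kappa sm nP nPt nQ d0 d1 d2 Xs opt Zs bk It bt_def Zt_def])
  have D: "\<rho> * (norm (Z1 - Zt))\<^sup>2 + (norm (b1 - bt))\<^sup>2 / \<rho> \<le> (norm n)\<^sup>2 / (8 * mf)"
    by (rule perturb[OF linP linQ linPt linQt adjP adjQ mono rho mf I II III It bt_def Zt_def])
  define u where "u = Gnorm \<rho> (Zk - Zs) (bk - bs)"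
  have u0: "u \<ge> 0" using rho by (simp add: u_def Gnorm_nonneg)
  have sd: "sqrt (1 + \<delta>) > 0" using d0 by simp
  have g1: "Gnorm \<rho> (Zt - Zs) (bt - bs) \<le> u / sqrt (1 + \<delta>)"
  proof (rule sq_le_imp_le)
    show "0 \<le> u / sqrt (1 + \<delta>)" using u0 sd by simp
    have "(1 + \<delta>) * (Gnorm \<rho> (Zt - Zs) (bt - bs))\<^sup>2 \<le> u\<^sup>2"
      using C rho by (simp add: u_def Gnorm_sq)
    then have "(Gnorm \<rho> (Zt - Zs) (bt - bs))\<^sup>2 \<le> u\<^sup>2 / (1 + \<delta>)"
      using d0 by (simp add: pos_le_divide_eq mult.commute)
    also have "u\<^sup>2 / (1 + \<delta>) = (u / sqrt (1 + \<delta>))\<^sup>2"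
      using d0 by (simp add: power_divide)
    finally show "(Gnorm \<rho> (Zt - Zs) (bt - bs))\<^sup>2 \<le> (u / sqrt (1 + \<delta>))\<^sup>2" .
  qed
  have g2: "Gnorm \<rho> (Z1 - Zt) (b1 - bt) \<le> norm n / (2 * sqrt 2 * sqrt mf)"
  proof (rule sq_le_imp_le)
    show "0 \<le> norm n / (2 * sqrt 2 * sqrt mf)" using mf by simp
    have "(norm n / (2 * sqrt 2 * sqrt mf))\<^sup>2 = (norm n)\<^sup>2 / (8 * mf)"
      using mf by (simp add: power_divide power_mult_distrib)
    then show "(Gnorm \<rho> (Z1 - Zt) (b1 - bt))\<^sup>2 \<le> (norm n / (2 * sqrt 2 * sqrt mf))\<^sup>2"
      using D rho by (simp add: Gnorm_sq)
  qed
  have "Gnorm \<rho> (Z1 - Zs) (b1 - bs) = Gnorm \<rho> ((Zt - Zs) + (Z1 - Zt)) ((bt - bs) + (b1 - bt))"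
    by simp
  also have "\<dots> \<le> Gnorm \<rho> (Zt - Zs) (bt - bs) + Gnorm \<rho> (Z1 - Zt) (b1 - bt)"
    by (rule Gnorm_triangle[OF rho])
  finally show ?thesis using g1 g2 by (simp add: u_def)
qed

lemma final_num:
  fixes u \<nu> mf \<delta> y r G1 E0 W b :: real
  assumes mf: "mf > 0" and d0: "0 \<le> \<delta>" and d1: "\<delta> \<le> 1" and u0: "u \<ge> 0" and nu: "\<nu> \<ge> 0"
    and G0: "0 \<le> G1" and G: "G1 \<le> u / sqrt (1 + \<delta>) + \<nu> / (2 * sqrt mf)"
    and bdef: "b = 1 / (2 * (1 + \<delta>))"
    and Wdef: "W = \<nu> / (sqrt 2 * mf) + sqrt 2 * \<nu>"
    and y: "y \<ge> 2 * b / sqrt mf * W"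
    and r: "r \<ge> sqrt 2 * b / mf * W * \<nu> + b * W\<^sup>2 + b / (2 * mf\<^sup>2) * \<nu>\<^sup>2 - E0 * \<nu>\<^sup>2"
    and E0: "(1 + \<delta>) * E0 \<le> 2 / mf"
  shows "G1\<^sup>2 \<le> (2 * mf + 1) / (2 * mf * (1 + \<delta>)) * u\<^sup>2 + y * u + r"
proof -
  define s where "s = 1 + \<delta>"
  have s1: "s \<ge> 1" "s \<le> 2" "s > 0" using d0 d1 by (simp_all add: s_def)
  have bs: "b = 1 / (2 * s)" by (simp add: bdef s_def)
  have sqs: "sqrt s > 0" using s1 by simp
  have sqm: "sqrt mf > 0" using mf by simp
  have "G1\<^sup>2 \<le> (u / sqrt s + \<nu> / (2 * sqrt mf))\<^sup>2"
    using G G0 by (intro power_mono) (simp_all add: s_def)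
  also have "\<dots> = (u / sqrt s)\<^sup>2 + 2 * (u / sqrt s) * (\<nu> / (2 * sqrt mf)) + (\<nu> / (2 * sqrt mf))\<^sup>2"
    by (simp add: power2_eq_square algebra_simps)
  also have "\<dots> = u\<^sup>2 / s + u * \<nu> / (sqrt s * sqrt mf) + \<nu>\<^sup>2 / (4 * mf)"
    using s1 mf by (simp add: power_divide power_mult_distrib)
  finally have h1: "G1\<^sup>2 \<le> u\<^sup>2 / s + u * \<nu> / (sqrt s * sqrt mf) + \<nu>\<^sup>2 / (4 * mf)" .
  have W2: "W \<ge> sqrt 2 * \<nu>" using Wdef nu mf by simp
  have "u * \<nu> / (sqrt s * sqrt mf) \<le> u * (sqrt 2 * \<nu>) / (s * sqrt mf)"
  proof -
    have "sqrt s * sqrt s = s" using s1 by simp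
    have "sqrt s \<le> sqrt 2" using s1 by simp
    then have "sqrt s * 1 \<le> sqrt 2 * 1" by simp
    have "1 / sqrt s \<le> sqrt 2 / s"
    proof -
      have "1 / sqrt s = sqrt s / s" using s1 sqs by (simp add: field_simps)
      also have "\<dots> \<le> sqrt 2 / s" using \<open>sqrt s \<le> sqrt 2\<close> s1 by (simp add: divide_right_mono)
      finally show ?thesis .
    qed
    then have "(u * \<nu> / sqrt mf) * (1 / sqrt s) \<le> (u * \<nu> / sqrt mf) * (sqrt 2 / s)"
      using u0 nu sqm by (intro mult_left_mono) simp_all
    then show ?thesis by (simp add: field_simps)
  qed
  also have "\<dots> \<le> y * u"
  proof -
    have "u * (sqrt 2 * \<nu>) / (s * sqrt mf) \<le> u * W / (s * sqrt mf)"
      using W2 u0 s1 sqm by (simp add: divide_right_mono mult_left_mono)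
    also have "\<dots> = (2 * b / sqrt mf * W) * u" using s1 sqm by (simp add: bs field_simps)
    also have "\<dots> \<le> y * u" using mult_right_mono[OF y u0] .
    finally show ?thesis .
  qed
  finally have h2: "u * \<nu> / (sqrt s * sqrt mf) \<le> y * u" .
  have Wsq: "W\<^sup>2 = \<nu>\<^sup>2 / (2 * mf\<^sup>2) + 2 * \<nu>\<^sup>2 / mf + 2 * \<nu>\<^sup>2"
    using mf by (simp add: Wdef power2_eq_square field_simps)
  have Wnu: "sqrt 2 / mf * W * \<nu> = \<nu>\<^sup>2 / mf\<^sup>2 + 2 * \<nu>\<^sup>2 / mf"
    using mf by (simp add: Wdef power2_eq_square field_simps)
  have rlow: "sqrt 2 * b / mf * W * \<nu> + b * W\<^sup>2 + b / (2 * mf\<^sup>2) * \<nu>\<^sup>2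
      = \<nu>\<^sup>2 / s * (1 / mf\<^sup>2 + 2 / mf + 1)"
  proof -
    have "sqrt 2 * b / mf * W * \<nu> = b * (sqrt 2 / mf * W * \<nu>)" by simp
    then show ?thesis unfolding Wsq using Wnu mf s1
      by (simp add: bs power2_eq_square field_simps)
  qed
  have E0': "E0 * \<nu>\<^sup>2 \<le> \<nu>\<^sup>2 / s * (2 / mf)"
  proof -
    have "s * E0 \<le> 2 / mf" using E0 by (simp add: s_def)
    then have "E0 \<le> (2 / mf) / s" using pos_le_divide_eq[OF s1(3)] by (metis mult.commute)
    from mult_right_mono[OF this, of "\<nu>\<^sup>2"] have "E0 * \<nu>\<^sup>2 \<le> ((2 / mf) / s) * \<nu>\<^sup>2" by simp
    moreover have "((2 / mf) / s) * \<nu>\<^sup>2 = \<nu>\<^sup>2 / s * (2 / mf)" by (simp add: mult.commute)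
    ultimately show ?thesis by linarith
  qed
  have h3: "\<nu>\<^sup>2 / (4 * mf) \<le> \<nu>\<^sup>2 / s * (1 + 1 / mf\<^sup>2)"
  proof -
    have a: "s / (4 * mf) \<le> 1 / (2 * mf)" using s1 mf by (simp add: field_simps)
    have b: "1 / (2 * mf) \<le> 1 + 1 / mf\<^sup>2"
    proof -
      define k where "k = 1 / mf"
      have "0 \<le> (1 - k)\<^sup>2" by simp
      then have "2 * k \<le> 1 + k\<^sup>2" by (simp add: power2_diff)
      then have "2 / mf \<le> 1 + 1 / mf\<^sup>2" by (simp add: k_def power_one_over)
      moreover have "1 / (2 * mf) \<le> 2 / mf" using mf by (simp add: field_simps)
      ultimately show ?thesis by linarith
    qed
    have "s / (4 * mf) \<le> 1 + 1 / mf\<^sup>2" using a b by linarith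
    then have "(\<nu>\<^sup>2 / s) * (s / (4 * mf)) \<le> (\<nu>\<^sup>2 / s) * (1 + 1 / mf\<^sup>2)"
      using s1 by (intro mult_left_mono) simp_all
    then show ?thesis using s1 by (simp add: field_simps)
  qed
  have r2: "r \<ge> \<nu>\<^sup>2 / s * (1 / mf\<^sup>2 + 2 / mf + 1) - \<nu>\<^sup>2 / s * (2 / mf)"
    using r rlow E0' by linarith
  have r3: "\<nu>\<^sup>2 / s * (1 / mf\<^sup>2 + 2 / mf + 1) - \<nu>\<^sup>2 / s * (2 / mf) = \<nu>\<^sup>2 / s * (1 + 1 / mf\<^sup>2)"
    by (simp add: algebra_simps)
  have au: "u\<^sup>2 / s \<le> (2 * mf + 1) / (2 * mf * (1 + \<delta>)) * u\<^sup>2"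
  proof -
    have "1 / s \<le> (2 * mf + 1) / (2 * mf * s)" using mf s1 by (simp add: field_simps)
    from mult_right_mono[OF this, of "u\<^sup>2"] have "(1 / s) * u\<^sup>2 \<le> (2 * mf + 1) / (2 * mf * s) * u\<^sup>2" by simp
    moreover have "(1 / s) * u\<^sup>2 = u\<^sup>2 / s" by simp
    ultimately show ?thesis by (simp add: s_def)
  qed
  show ?thesis using h1 h2 h3 r2 r3 au by linarith
qed

lemma adj_linear:
  fixes P :: "'z::real_inner \<Rightarrow> 'x::real_inner" and Pt :: "'x \<Rightarrow> 'z"
  assumes adj: "\<And>z x. P z \<bullet> x = z \<bullet> Pt x"
  shows "linear P" "linear Pt"
proof -
  show "linear P"
  proof (rule linearI)
    fix a b show "P (a + b) = P a + P b"
      by (rule vector_eq_rdot[THEN iffD1]) (simp add: adj inner_add_left)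
  next
    fix r a show "P (r *\<^sub>R a) = r *\<^sub>R P a"
      by (rule vector_eq_rdot[THEN iffD1]) (simp add: adj)
  qed
  show "linear Pt"
  proof (rule linearI)
    fix a b show "Pt (a + b) = Pt a + Pt b"
      by (rule vector_eq_ldot[THEN iffD1]) (simp add: adj[symmetric] inner_add_right)
  next
    fix r a show "Pt (r *\<^sub>R a) = r *\<^sub>R Pt a"
      by (rule vector_eq_ldot[THEN iffD1]) (simp add: adj[symmetric])
  qed
qed

lemma adj_norm:
  fixes P :: "'z::real_inner \<Rightarrow> 'x::real_inner" and Pt :: "'x \<Rightarrow> 'z"
  assumes adj: "\<And>z x. P z \<bullet> x = z \<bullet> Pt x" and nb: "\<And>z. norm (P z) \<le> s * norm z"
    and s0: "s \<ge> 0"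
  shows "norm (Pt x) \<le> s * norm x"
proof (cases "Pt x = 0")
  case True
  then show ?thesis using s0 by simp
next
  case False
  have "(norm (Pt x))\<^sup>2 = P (Pt x) \<bullet> x" by (simp add: adj power2_norm_eq_inner)
  also have "\<dots> \<le> norm (P (Pt x)) * norm x" by (rule norm_cauchy_schwarz)
  also have "\<dots> \<le> s * norm (Pt x) * norm x" by (simp add: mult_right_mono nb)
  finally have "norm (Pt x) * norm (Pt x) \<le> (s * norm x) * norm (Pt x)"
    by (simp add: power2_eq_square algebra_simps)
  then show ?thesis using False by simp
qed

lemma sum_if_eq2:
  fixes g h :: "'n::finite \<Rightarrow> 'b::comm_monoid_add"
  assumes ne: "i1 \<noteq> i2"
  shows "(\<Sum>i\<in>UNIV. if i1 = i then g i else if i2 = i then h i else 0) = g i1 + h i2"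
proof -
  have "\<And>i. (if i1 = i then g i else if i2 = i then h i else 0) = (if i1 = i then g i else 0) + (if i2 = i then h i else 0)"
    using ne by auto
  then have "(\<Sum>i\<in>UNIV. if i1 = i then g i else if i2 = i then h i else 0)
    = (\<Sum>i\<in>UNIV. if i1 = i then g i else 0) + (\<Sum>i\<in>UNIV. if i2 = i then h i else 0)"
    by (simp add: sum.distrib)
  then show ?thesis by simp
qed

lemma inner_vec_outer: "(x :: ('b::real_inner)^'n) \<bullet> y = (\<Sum>i\<in>UNIV. x$i \<bullet> y$i)"
  by (simp add: inner_vec_def)

lemma adjP_conc:
  fixes ar :: "'a::finite \<Rightarrow> 'n::finite \<times> 'n"
  assumes ne: "\<And>q. fst (ar q) \<noteq> snd (ar q)"
  shows "Mplus ar Z \<bullet> X = Z \<bullet> MplusT ar (X :: real^'d^'n)"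
proof -
  have "Mplus ar Z \<bullet> X = (\<Sum>i\<in>UNIV. \<Sum>q\<in>UNIV. (if fst (ar q) = i \<or> snd (ar q) = i then Z $ q else 0) \<bullet> X $ i)"
    by (simp only: inner_vec_outer[where 'b="real^'d"] Mplus_def vec_lambda_beta inner_sum_left)
  also have "\<dots> = (\<Sum>q\<in>UNIV. \<Sum>i\<in>UNIV. (if fst (ar q) = i then Z $ q \<bullet> X $ i else if snd (ar q) = i then Z $ q \<bullet> X $ i else 0))"
    by (subst sum.swap) (auto intro!: sum.cong)
  also have "\<dots> = (\<Sum>q\<in>UNIV. Z $ q \<bullet> X $ fst (ar q) + Z $ q \<bullet> X $ snd (ar q))"
    by (intro sum.cong refl, subst sum_if_eq2[OF ne]) simp
  also have "\<dots> = Z \<bullet> MplusT ar X"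
    by (simp only: inner_vec_outer[where 'b="real^'d"] MplusT_def vec_lambda_beta inner_add_right)
  finally show ?thesis .
qed

lemma adjQ_conc:
  fixes ar :: "'a::finite \<Rightarrow> 'n::finite \<times> 'n"
  assumes ne: "\<And>q. fst (ar q) \<noteq> snd (ar q)"
  shows "Mminus ar Z \<bullet> X = Z \<bullet> MminusT ar (X :: real^'d^'n)"
proof -
  have "Mminus ar Z \<bullet> X = (\<Sum>i\<in>UNIV. \<Sum>q\<in>UNIV. (if fst (ar q) = i then Z $ q else if snd (ar q) = i then - (Z $ q) else 0) \<bullet> X $ i)"
    by (simp only: inner_vec_outer[where 'b="real^'d"] Mminus_def vec_lambda_beta inner_sum_left)
  also have "\<dots> = (\<Sum>q\<in>UNIV. \<Sum>i\<in>UNIV. (if fst (ar q) = i then Z $ q \<bullet> X $ i else if snd (ar q) = i then - (Z $ q \<bullet> X $ i) else 0))"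
    by (subst sum.swap) (auto intro!: sum.cong)
  also have "\<dots> = (\<Sum>q\<in>UNIV. Z $ q \<bullet> X $ fst (ar q) - Z $ q \<bullet> X $ snd (ar q))"
    by (intro sum.cong refl, subst sum_if_eq2[OF ne]) simp
  also have "\<dots> = Z \<bullet> MminusT ar X"
    by (simp only: inner_vec_outer[where 'b="real^'d"] MminusT_def vec_lambda_beta inner_diff_right)
  finally show ?thesis .
qed

lemma vec_norm_sq: "(norm (x::('b::real_normed_vector)^'n))\<^sup>2 = (\<Sum>i\<in>UNIV. (norm (x$i))\<^sup>2)"
  by (simp add: norm_vec_def L2_set_def sum_nonneg)

lemma norm_vec_outer: "norm (x::('b::real_normed_vector)^'n) = L2_set (\<lambda>i. norm (x$i)) UNIV"
  by (simp add: norm_vec_def)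

lemma one_vec_nz: "(1::real^'d) \<noteq> 0"
  by (simp add: vec_eq_iff)

lemma MplusT_nz:
  fixes ar :: "'a::finite \<Rightarrow> 'n::finite \<times> 'n"
  assumes ne: "fst (ar q0) \<noteq> snd (ar q0)"
  shows "MplusT ar ((\<chi> i. if i = fst (ar q0) then 1 else 0) :: real^'d^'n) \<noteq> 0"
proof
  assume h: "MplusT ar ((\<chi> i. if i = fst (ar q0) then 1 else 0) :: real^'d^'n) = 0"
  have "(MplusT ar ((\<chi> i. if i = fst (ar q0) then 1 else 0) :: real^'d^'n)) $ q0 = 1"
    using ne by (simp add: MplusT_def)
  then show False using h one_vec_nz by simp
qed

lemma MminusT_nz:
  fixes ar :: "'a::finite \<Rightarrow> 'n::finite \<times> 'n"
  assumes ne: "fst (ar q0) \<noteq> snd (ar q0)"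
  shows "MminusT ar ((\<chi> i. if i = fst (ar q0) then 1 else 0) :: real^'d^'n) \<noteq> 0"
proof
  assume h: "MminusT ar ((\<chi> i. if i = fst (ar q0) then 1 else 0) :: real^'d^'n) = 0"
  have "(MminusT ar ((\<chi> i. if i = fst (ar q0) then 1 else 0) :: real^'d^'n)) $ q0 = 1"
    using ne by (simp add: MminusT_def)
  then show False using h one_vec_nz by simp
qed

lemma adj_nz:
  fixes P :: "'z::real_inner \<Rightarrow> 'x::real_inner" and Pt :: "'x \<Rightarrow> 'z"
  assumes adj: "\<And>z x. P z \<bullet> x = z \<bullet> Pt x" and nz: "Pt x0 \<noteq> 0"
  shows "P (Pt x0) \<noteq> 0"
proof
  assume "P (Pt x0) = 0"
  then have "Pt x0 \<bullet> Pt x0 = 0" using adj[of "Pt x0" x0] by simp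
  then show False using nz by simp
qed

lemma Mminus_le_Mplus:
  fixes ar :: "'a::finite \<Rightarrow> 'n::finite \<times> 'n" and v :: "real^'d^'a"
  shows "\<exists>w::real^'d^'a. norm w = norm v \<and> norm (Mminus ar v) \<le> norm (Mplus ar w)"
proof -
  define u where "u = (axis undefined 1 :: real^'d)"
  have nu: "norm u = 1" by (simp add: u_def)
  define w where "w = (\<chi> q. norm (v$q) *\<^sub>R u)"
  have nw: "norm w = norm v"
    unfolding norm_vec_outer[where 'b="real^'d", of w] norm_vec_outer[where 'b="real^'d", of v]
    by (simp add: w_def nu)
  define S where "S i = (\<Sum>q\<in>UNIV. if fst (ar q) = i \<or> snd (ar q) = i then norm (v$q) else 0)" for i
  have S0: "S i \<ge> 0" for i by (simp add: S_def sum_nonneg)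
  have c1: "norm ((Mminus ar v) $ i) \<le> S i" for i
  proof -
    have "norm ((Mminus ar v) $ i) = norm (\<Sum>q\<in>UNIV. (if fst (ar q) = i then v $ q
                                   else if snd (ar q) = i then - (v $ q) else 0))"
      by (simp add: Mminus_def)
    also have "\<dots> \<le> (\<Sum>q\<in>UNIV. norm (if fst (ar q) = i then v $ q
                                   else if snd (ar q) = i then - (v $ q) else 0))"
      by (rule norm_sum)
    also have "\<dots> \<le> S i" unfolding S_def
      by (rule sum_mono) auto
    finally show ?thesis .
  qed
  have c2: "(Mplus ar w) $ i = S i *\<^sub>R u" for i
  proof -
    have "(Mplus ar w) $ i = (\<Sum>q\<in>UNIV. (if fst (ar q) = i \<or> snd (ar q) = i then norm (v$q) else 0) *\<^sub>R u)"
      by (auto simp: Mplus_def w_def intro!: sum.cong)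
    then show ?thesis by (simp add: S_def scaleR_sum_left)
  qed
  have "norm (Mminus ar v) \<le> norm (Mplus ar w)"
    unfolding norm_vec_outer[where 'b="real^'d", of "Mminus ar v"] norm_vec_outer[where 'b="real^'d", of "Mplus ar w"]
    by (rule L2_set_mono) (simp_all add: c1 c2 nu S0)
  then show ?thesis using nw by (intro exI[of _ w] conjI)
qed

theorem mainTheorem4:
  fixes E :: "('n::finite) set set"
    and ar :: "'a::finite \<Rightarrow> 'n \<times> 'n"
    and f :: "'n \<Rightarrow> real^'d::finite \<Rightarrow> real"
    and df :: "'n \<Rightarrow> real^'d \<Rightarrow> real^'d"
    and m Mlip :: "'n \<Rightarrow> real"
    and xstar :: "real^'d"
    and betastar :: "real^'d^'a"
    and \<kappa> \<rho> :: real
    and M :: "'o measure"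
    and w X :: "nat \<Rightarrow> 'o \<Rightarrow> real^'d^'n"
    and Z \<beta> :: "nat \<Rightarrow> 'o \<Rightarrow> real^'d^'a"
  assumes edges: "\<forall>e\<in>E. card e = 2"
    and conn: "connected_graph E"
    and enum: "bij_betw ar UNIV (arcs E)"
    and grad: "\<And>i x. (f i has_derivative (\<lambda>h. df i x \<bullet> h)) (at x)"
    and m_pos: "\<And>i. m i > 0"
    and strong: "\<And>i u v. (df i u - df i v) \<bullet> (u - v) \<ge> m i * (norm (u - v))\<^sup>2"
    and lip: "\<And>i u v. norm (df i u - df i v) \<le> Mlip i * norm (u - v)"
    and xstar_min: "\<And>x. (\<Sum>i\<in>UNIV. f i xstar) \<le> (\<Sum>i\<in>UNIV. f i x)"
    and betastar_range: "betastar \<in> range (MminusT ar)"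
    and betastar_eq: "(\<chi> i. df i xstar) + Mminus ar betastar = 0"
    and kappa: "\<kappa> > 1"
    and rho: "\<rho> > 0"
    and P: "prob_space M"
    and gauss: "\<And>k. k \<ge> 1 \<Longrightarrow> distributed M lborel (w k) std_gauss_density"
    and indep: "prob_space.indep_vars M (\<lambda>_. borel)
                  (\<lambda>k \<omega>. if k = 0 then (X 0 \<omega>, \<beta> 0 \<omega>) else (w k \<omega>, 0)) UNIV"
    and init_range: "\<And>\<omega>. \<omega> \<in> space M \<Longrightarrow> \<beta> 0 \<omega> \<in> range (MminusT ar)"
    and init_Z: "\<And>\<omega>. \<omega> \<in> space M \<Longrightarrow> Z 0 \<omega> = (1/2) *\<^sub>R MplusT ar (X 0 \<omega>)"
    and iterI: "\<And>k \<omega>. \<omega> \<in> space M \<Longrightarrow>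
        (\<chi> i. df i (X (Suc k) \<omega> $ i)) + Mminus ar (\<beta> (Suc k) \<omega>)
          + sqrt 2 *\<^sub>R Dmat E (w (Suc k) \<omega>)
        = \<rho> *\<^sub>R Mplus ar (Z k \<omega> - Z (Suc k) \<omega>)"
    and iterII: "\<And>k \<omega>. \<omega> \<in> space M \<Longrightarrow>
        \<beta> (Suc k) \<omega> - \<beta> k \<omega> - (\<rho> / 2) *\<^sub>R MminusT ar (X (Suc k) \<omega>) = 0"
    and iterIII: "\<And>k \<omega>. \<omega> \<in> space M \<Longrightarrow>
        (1/2) *\<^sub>R MplusT ar (X (Suc k) \<omega>) - Z (Suc k) \<omega> = 0"
  shows "AE \<omega> in M. \<forall>k.
     (let mf = Min (range m); Mf = Max (range Mlip);
          smaxP = sigma_max (Mplus ar :: real^'d^'a \<Rightarrow> real^'d^'n);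
          smaxM = sigma_max (Mminus ar :: real^'d^'a \<Rightarrow> real^'d^'n);
          sminM = sigma_min (Mminus ar :: real^'d^'a \<Rightarrow> real^'d^'n);
          \<delta> = cdelta \<kappa> \<rho> mf Mf smaxP sminM;
          Zs = (1/2) *\<^sub>R MplusT ar ((\<chi> i. xstar) :: real^'d^'n);
          Dw = Dmat E (w (Suc k) \<omega>)
      in (Gnorm \<rho> (Z (Suc k) \<omega> - Zs) (\<beta> (Suc k) \<omega> - betastar))\<^sup>2
         \<le> ca \<delta> mf * (Gnorm \<rho> (Z k \<omega> - Zs) (\<beta> k \<omega> - betastar))\<^sup>2
           + ynoise \<kappa> \<rho> mf Mf smaxP smaxM sminM Dw * Gnorm \<rho> (Z k \<omega> - Zs) (\<beta> k \<omega> - betastar)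
           + rnoise \<kappa> \<rho> mf Mf smaxP smaxM sminM Dw)"
proof -
  have ne: "fst (ar q) \<noteq> snd (ar q)" for q
  proof -
    have "ar q \<in> arcs E" using bij_betw_apply[OF enum] by simp
    then have "{fst (ar q), snd (ar q)} \<in> E" by (cases "ar q") (simp add: arcs_def)
    then have "card {fst (ar q), snd (ar q)} = 2" using edges by blast
    then show ?thesis by (cases "fst (ar q) = snd (ar q)") auto
  qed
  have adjP: "\<And>z x. Mplus ar z \<bullet> x = z \<bullet> MplusT ar (x :: real^'d^'n)"
    by (rule adjP_conc[OF ne])
  have adjQ: "\<And>z x. Mminus ar z \<bullet> x = z \<bullet> MminusT ar (x :: real^'d^'n)"
    by (rule adjQ_conc[OF ne])
  have linP: "linear (Mplus ar :: real^'d^'a \<Rightarrow> real^'d^'n)" by (rule adj_linear(1)[OF adjP])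
  have linPt: "linear (MplusT ar :: real^'d^'n \<Rightarrow> real^'d^'a)" by (rule adj_linear(2)[OF adjP])
  have linQ: "linear (Mminus ar :: real^'d^'a \<Rightarrow> real^'d^'n)" by (rule adj_linear(1)[OF adjQ])
  have linQt: "linear (MminusT ar :: real^'d^'n \<Rightarrow> real^'d^'a)" by (rule adj_linear(2)[OF adjQ])
  have adjQeq: "adjoint (Mminus ar :: real^'d^'a \<Rightarrow> real^'d^'n) = MminusT ar"
    by (rule adjoint_unique) (simp add: adjQ)
  define x0 where "x0 = ((\<chi> i. if i = fst (ar undefined) then 1 else 0) :: real^'d^'n)"
  have Ptx0: "MplusT ar x0 \<noteq> 0" unfolding x0_def by (rule MplusT_nz[of ar undefined, OF ne[of undefined]])
  have Qtx0: "MminusT ar x0 \<noteq> 0" unfolding x0_def by (rule MminusT_nz[of ar undefined, OF ne[of undefined]])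
  have nzP: "Mplus ar (MplusT ar x0) \<noteq> 0" by (rule adj_nz[OF adjP Ptx0])
  have nzQ: "Mminus ar (MminusT ar x0) \<noteq> 0" by (rule adj_nz[OF adjQ Qtx0])
  define smaxP where "smaxP = sigma_max (Mplus ar :: real^'d^'a \<Rightarrow> real^'d^'n)"
  define smaxM where "smaxM = sigma_max (Mminus ar :: real^'d^'a \<Rightarrow> real^'d^'n)"
  define sminM where "sminM = sigma_min (Mminus ar :: real^'d^'a \<Rightarrow> real^'d^'n)"
  have svP: "\<And>z::real^'d^'a. norm (Mplus ar z) \<le> smaxP * norm z"
    unfolding smaxP_def by (rule sv_max(2)[OF linP nzP])
  have finP: "finite (sing_vals (Mplus ar :: real^'d^'a \<Rightarrow> real^'d^'n))" by (rule sv_finite[OF linP])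
  have neP: "sing_vals (Mplus ar :: real^'d^'a \<Rightarrow> real^'d^'n) \<noteq> {}" by (rule sv_max(1)[OF linP nzP])
  have sP_pos: "smaxP > 0"
    using Max_in[OF finP neP] by (simp add: smaxP_def sigma_max_def sing_vals_def)
  have svPt: "\<And>x. norm (MplusT ar x) \<le> smaxP * norm (x :: real^'d^'n)"
    by (rule adj_norm[OF adjP svP]) (use sP_pos in simp)
  have svQ: "\<And>v. v \<in> range (MminusT ar :: real^'d^'n \<Rightarrow> real^'d^'a) \<Longrightarrow> sminM * norm v \<le> norm (Mminus ar v)"
    unfolding sminM_def using sv_min(1)[OF linQ nzQ] adjQeq by simp
  have sm_pos: "sminM > 0" unfolding sminM_def by (rule sv_min(2)[OF linQ nzQ])
  have finM: "finite (sing_vals (Mminus ar :: real^'d^'a \<Rightarrow> real^'d^'n))" by (rule sv_finite[OF linQ])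
  have neM: "sing_vals (Mminus ar :: real^'d^'a \<Rightarrow> real^'d^'n) \<noteq> {}" by (rule sv_max(1)[OF linQ nzQ])
  have sm_le_sM: "sminM \<le> smaxM"
    unfolding sminM_def smaxM_def sigma_min_def sigma_max_def
    using Min_le[OF finM Max_in[OF finM neM]] .
  have sm_le_sP: "sminM \<le> smaxP"
  proof -
    define zM where "zM = MminusT ar x0"
    define v0 where "v0 = MminusT ar (Mminus ar zM)"
    have "zM \<bullet> v0 = Mminus ar zM \<bullet> Mminus ar zM" by (simp add: v0_def adjQ)
    then have v0nz: "v0 \<noteq> 0" using nzQ by (auto simp: zM_def)
    have v0r: "v0 \<in> range (MminusT ar)" by (simp add: v0_def)
    obtain w :: "real^'d^'a" where w: "norm w = norm v0" "norm (Mminus ar v0) \<le> norm (Mplus ar w)"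
      using Mminus_le_Mplus by blast
    have "sminM * norm v0 \<le> smaxP * norm v0"
    proof -
      have "norm (Mplus ar w) \<le> smaxP * norm v0" using svP[of w] w(1) by simp
      then show ?thesis using svQ[OF v0r] w(2) by linarith
    qed
    moreover have "norm v0 > 0" using v0nz by simp
    ultimately show ?thesis using mult_right_le_imp_le by blast
  qed
  define mf where "mf = Min (range m)"
  define Mf where "Mf = Max (range Mlip)"
  have finm: "finite (range m)" "range m \<noteq> {}" by simp_all
  have finL: "finite (range Mlip)" "range Mlip \<noteq> {}" by simp_all
  have mf_le: "mf \<le> m i" for i unfolding mf_def using finm by simp
  have mf_pos: "mf > 0" unfolding mf_def using Min_in[OF finm] m_pos by auto
  have Mf_ge: "Mlip i \<le> Mf" for i unfolding Mf_def using finL by simp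
  have m_le_Mlip: "m i \<le> Mlip i" for i
  proof -
    define u where "u = (axis undefined 1 :: real^'d)"
    have nu: "norm u = 1" by (simp add: u_def)
    have "m i * (norm (u - 0))\<^sup>2 \<le> (df i u - df i 0) \<bullet> (u - 0)" by (rule strong)
    also have "\<dots> \<le> norm (df i u - df i 0) * norm (u - 0)" by (rule norm_cauchy_schwarz)
    also have "\<dots> \<le> Mlip i * norm (u - 0) * norm (u - 0)"
      by (rule mult_right_mono[OF lip]) simp
    finally show ?thesis using nu by simp
  qed
  have Mlip_pos: "Mlip i > 0" for i using m_le_Mlip[of i] m_pos[of i] by linarith
  have mf_le_Mf: "mf \<le> Mf" using mf_le[of undefined] m_le_Mlip[of undefined] Mf_ge[of undefined] by linarith
  define G where "G X = (\<chi> i. df i (X $ i))" for X :: "real^'d^'n"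
  have monoG: "mf * (norm (X - Y))\<^sup>2 \<le> (G X - G Y) \<bullet> (X - Y)" for X Y
  proof -
    have "mf * (norm (X - Y))\<^sup>2 = (\<Sum>i\<in>UNIV. mf * (norm (X $ i - Y $ i))\<^sup>2)"
      by (simp add: vec_norm_sq sum_distrib_left)
    also have "\<dots> \<le> (\<Sum>i\<in>UNIV. (df i (X $ i) - df i (Y $ i)) \<bullet> (X $ i - Y $ i))"
    proof (rule sum_mono)
      fix i
      have "mf * (norm (X $ i - Y $ i))\<^sup>2 \<le> m i * (norm (X $ i - Y $ i))\<^sup>2"
        using mf_le[of i] by (simp add: mult_right_mono)
      also have "\<dots> \<le> (df i (X $ i) - df i (Y $ i)) \<bullet> (X $ i - Y $ i)" by (rule strong)
      finally show "mf * (norm (X $ i - Y $ i))\<^sup>2 \<le> (df i (X $ i) - df i (Y $ i)) \<bullet> (X $ i - Y $ i)" .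
    qed
    also have "\<dots> = (G X - G Y) \<bullet> (X - Y)"
      by (simp only: inner_vec_outer[where 'b="real^'d"] G_def vec_lambda_beta vector_minus_component)
    finally show ?thesis .
  qed
  have lipG: "norm (G X - G Y) \<le> Mf * norm (X - Y)" for X Y
  proof -
    have Mf0: "Mf \<ge> 0" using Mlip_pos[of undefined] Mf_ge[of undefined] by linarith
    have "(norm (G X - G Y))\<^sup>2 = (\<Sum>i\<in>UNIV. (norm (df i (X $ i) - df i (Y $ i)))\<^sup>2)"
      by (simp add: vec_norm_sq G_def)
    also have "\<dots> \<le> (\<Sum>i\<in>UNIV. Mf\<^sup>2 * (norm (X $ i - Y $ i))\<^sup>2)"
    proof (rule sum_mono)
      fix i
      have "norm (df i (X $ i) - df i (Y $ i)) \<le> Mf * norm (X $ i - Y $ i)"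
        using lip[of i "X $ i" "Y $ i"] mult_right_mono[OF Mf_ge[of i], of "norm (X $ i - Y $ i)"] by simp
      then have "(norm (df i (X $ i) - df i (Y $ i)))\<^sup>2 \<le> (Mf * norm (X $ i - Y $ i))\<^sup>2"
        by (intro power_mono) simp_all
      then show "(norm (df i (X $ i) - df i (Y $ i)))\<^sup>2 \<le> Mf\<^sup>2 * (norm (X $ i - Y $ i))\<^sup>2"
        by (simp add: power_mult_distrib)
    qed
    also have "\<dots> = (Mf * norm (X - Y))\<^sup>2"
      by (simp add: vec_norm_sq power_mult_distrib sum_distrib_left)
    finally have h: "(norm (G X - G Y))\<^sup>2 \<le> (Mf * norm (X - Y))\<^sup>2" .
    show ?thesis by (rule power2_le_imp_le[OF h]) (simp add: Mf0)
  qed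
  define \<delta> where "\<delta> = cdelta \<kappa> \<rho> mf Mf smaxP sminM"
  define A where "A = (\<kappa> - 1) * sminM\<^sup>2 / (\<kappa> * smaxP\<^sup>2)"
  define den where "den = \<rho> / 4 * smaxP\<^sup>2 + \<kappa> * Mf\<^sup>2 / (\<rho> * sminM\<^sup>2)"
  have den_pos: "den > 0" using rho kappa sm_pos sP_pos by (simp add: den_def add_pos_nonneg)
  have A_pos: "A > 0" using kappa sm_pos sP_pos by (simp add: A_def)
  have dmin: "\<delta> = min A (mf / den)" by (simp add: \<delta>_def cdelta_def A_def den_def)
  have d0: "\<delta> \<ge> 0" using A_pos den_pos mf_pos by (simp add: dmin)
  have d1: "\<delta> * \<kappa> * smaxP\<^sup>2 \<le> (\<kappa> - 1) * sminM\<^sup>2"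
  proof -
    have "\<delta> \<le> A" by (simp add: dmin)
    then have "\<delta> * (\<kappa> * smaxP\<^sup>2) \<le> A * (\<kappa> * smaxP\<^sup>2)"
      using kappa by (intro mult_right_mono) simp_all
    also have "A * (\<kappa> * smaxP\<^sup>2) = (\<kappa> - 1) * sminM\<^sup>2" using kappa sP_pos by (simp add: A_def)
    finally show ?thesis by (simp add: mult.assoc)
  qed
  have d2: "\<delta> * den \<le> mf"
  proof -
    have "\<delta> \<le> mf / den" by (simp add: dmin)
    then have "\<delta> * den \<le> (mf / den) * den" using den_pos by (intro mult_right_mono) simp_all
    then show ?thesis using den_pos by simp
  qed
  have dle1: "\<delta> \<le> 1"
  proof -
    have "\<delta> \<le> A" by (simp add: dmin)
    also have "A \<le> 1"
    proof -
      have "(\<kappa> - 1) * sminM\<^sup>2 \<le> \<kappa> * smaxP\<^sup>2"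
      proof -
        have "sminM\<^sup>2 \<le> smaxP\<^sup>2" using sm_le_sP sm_pos by (intro power_mono) simp_all
        then have "(\<kappa> - 1) * sminM\<^sup>2 \<le> \<kappa> * smaxP\<^sup>2"
          using kappa by (intro mult_mono) simp_all
        then show ?thesis .
      qed
      then show ?thesis using kappa sP_pos by (simp add: A_def)
    qed
    finally show ?thesis .
  qed
  have E0b: "(1 + \<delta>) * ce \<delta> \<rho> sminM \<le> 2 / mf"
  proof -
    have pd: "1 + \<delta> \<noteq> 0" using d0 by simp
    have "(1 + \<delta>) * ce \<delta> \<rho> sminM = (1 + \<delta>) * (2 * \<delta>) / ((1 + \<delta>) * (\<rho> * sminM\<^sup>2))"
      by (simp add: ce_def mult.assoc)
    also have "\<dots> = 2 * \<delta> / (\<rho> * sminM\<^sup>2)" using pd by (rule mult_divide_mult_cancel_left)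
    also have "\<dots> = 2 * (\<delta> / (\<rho> * sminM\<^sup>2))" by simp
    finally have "(1 + \<delta>) * ce \<delta> \<rho> sminM = 2 * (\<delta> / (\<rho> * sminM\<^sup>2))" .
    also have "\<delta> / (\<rho> * sminM\<^sup>2) \<le> 1 / mf"
    proof -
      have "\<delta> * (\<kappa> * Mf\<^sup>2 / (\<rho> * sminM\<^sup>2)) \<le> \<delta> * den"
        using d0 rho sP_pos by (intro mult_left_mono) (simp_all add: den_def)
      then have h: "(\<delta> / (\<rho> * sminM\<^sup>2)) * (\<kappa> * Mf\<^sup>2) \<le> mf" using d2 by (simp add: field_simps)
      have "mf\<^sup>2 \<le> \<kappa> * Mf\<^sup>2"
      proof -
        have "mf\<^sup>2 \<le> Mf\<^sup>2" using mf_le_Mf mf_pos by (intro power_mono) simp_all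
        also have "\<dots> \<le> \<kappa> * Mf\<^sup>2" using mult_right_mono[of 1 \<kappa> "Mf\<^sup>2"] kappa by simp
        finally show ?thesis .
      qed
      then have "(\<delta> / (\<rho> * sminM\<^sup>2)) * mf\<^sup>2 \<le> (\<delta> / (\<rho> * sminM\<^sup>2)) * (\<kappa> * Mf\<^sup>2)"
        using d0 rho sm_pos by (intro mult_left_mono) simp_all
      then have "(\<delta> / (\<rho> * sminM\<^sup>2)) * mf\<^sup>2 \<le> mf" using h by linarith
      then have "(\<delta> / (\<rho> * sminM\<^sup>2) * mf) * mf \<le> 1 * mf" by (simp add: power2_eq_square mult.assoc)
      then have "\<delta> / (\<rho> * sminM\<^sup>2) * mf \<le> 1" using mf_pos mult_right_le_imp_le by blast
      then show ?thesis using mf_pos by (simp add: pos_le_divide_eq)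
    qed
    finally show ?thesis by simp
  qed
  define Xs where "Xs = ((\<chi> i. xstar) :: real^'d^'n)"
  have QtXs: "MminusT ar Xs = 0" by (simp add: Xs_def MminusT_def vec_eq_iff)
  have opt: "G Xs + Mminus ar betastar = 0" using betastar_eq by (simp add: G_def Xs_def)
  have d2': "\<delta> * (\<rho> / 4 * smaxP\<^sup>2 + \<kappa> * Mf\<^sup>2 / (\<rho> * sminM\<^sup>2)) \<le> mf"
    using d2 by (simp add: den_def)
  have eqII: "\<beta> (Suc k) \<omega> = \<beta> k \<omega> + (\<rho> / 2) *\<^sub>R MminusT ar (X (Suc k) \<omega>)"
    if om: "\<omega> \<in> space M" for k \<omega>
  proof -
    have h: "\<beta> (Suc k) \<omega> - \<beta> k \<omega> - (\<rho> / 2) *\<^sub>R MminusT ar (X (Suc k) \<omega>) = 0"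
      by (rule iterII[OF om])
    have "\<beta> (Suc k) \<omega> = (\<beta> (Suc k) \<omega> - \<beta> k \<omega> - (\<rho> / 2) *\<^sub>R MminusT ar (X (Suc k) \<omega>))
        + (\<beta> k \<omega> + (\<rho> / 2) *\<^sub>R MminusT ar (X (Suc k) \<omega>))" by simp
    then show ?thesis using h by simp
  qed
  have eqIII: "Z (Suc k) \<omega> = (1/2) *\<^sub>R MplusT ar (X (Suc k) \<omega>)"
    if om: "\<omega> \<in> space M" for k \<omega>
  proof -
    have h: "(1/2) *\<^sub>R MplusT ar (X (Suc k) \<omega>) - Z (Suc k) \<omega> = 0"
      by (rule iterIII[OF om])
    then show ?thesis by simp
  qed
  have brange: "\<beta> k \<omega> \<in> range (MminusT ar)" if om: "\<omega> \<in> space M" for k \<omega>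
  proof (induction k)
    case 0 then show ?case using init_range[OF om] by simp
  next
    case (Suc k)
    then obtain y where y: "\<beta> k \<omega> = MminusT ar y" by auto
    have "\<beta> (Suc k) \<omega> = MminusT ar (y + (\<rho> / 2) *\<^sub>R X (Suc k) \<omega>)"
      using eqII[OF om, of k] y by (simp add: linear_add[OF linQt] linear_scale[OF linQt])
    then show ?case by simp
  qed
  have main: "(Gnorm \<rho> (Z (Suc k) \<omega> - (1/2) *\<^sub>R MplusT ar Xs) (\<beta> (Suc k) \<omega> - betastar))\<^sup>2
     \<le> ca \<delta> mf * (Gnorm \<rho> (Z k \<omega> - (1/2) *\<^sub>R MplusT ar Xs) (\<beta> k \<omega> - betastar))\<^sup>2
       + ynoise \<kappa> \<rho> mf Mf smaxP smaxM sminM (Dmat E (w (Suc k) \<omega>))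
           * Gnorm \<rho> (Z k \<omega> - (1/2) *\<^sub>R MplusT ar Xs) (\<beta> k \<omega> - betastar)
       + rnoise \<kappa> \<rho> mf Mf smaxP smaxM sminM (Dmat E (w (Suc k) \<omega>))"
    if om: "\<omega> \<in> space M" for \<omega> k
  proof -
    define Zs where "Zs = (1/2) *\<^sub>R MplusT ar Xs"
    define Dw where "Dw = Dmat E (w (Suc k) \<omega>)"
    define n where "n = sqrt 2 *\<^sub>R Dw"
    define \<nu> where "\<nu> = norm Dw"
    define u where "u = Gnorm \<rho> (Z k \<omega> - Zs) (\<beta> k \<omega> - betastar)"
    define G1 where "G1 = Gnorm \<rho> (Z (Suc k) \<omega> - Zs) (\<beta> (Suc k) \<omega> - betastar)"
    have I: "G (X (Suc k) \<omega>) + Mminus ar (\<beta> (Suc k) \<omega>) + n = \<rho> *\<^sub>R Mplus ar (Z k \<omega> - Z (Suc k) \<omega>)"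
      using iterI[OF om, of k] by (simp add: G_def n_def Dw_def)
    have bk: "\<beta> k \<omega> - betastar \<in> range (MminusT ar)"
    proof -
      obtain y1 where y1: "\<beta> k \<omega> = MminusT ar y1" using brange[OF om, of k] by auto
      obtain y2 where y2: "betastar = MminusT ar y2" using betastar_range by auto
      have "\<beta> k \<omega> - betastar = MminusT ar (y1 - y2)" using y1 y2 by (simp add: linear_diff[OF linQt])
      then show ?thesis by simp
    qed
    have cr: "G1 \<le> u / sqrt (1 + \<delta>) + norm n / (2 * sqrt 2 * sqrt mf)"
      unfolding G1_def u_def
      by (rule core[OF linP linQ linPt linQt adjP adjQ monoG lipG mf_pos rho kappa sm_pos svP svPt svQ
            d0 d1 d2' QtXs opt Zs_def bk I eqII[OF om] eqIII[OF om]])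
    have nn: "norm n / (2 * sqrt 2 * sqrt mf) = \<nu> / (2 * sqrt mf)"
      by (simp add: n_def \<nu>_def)
    have sM0: "smaxM \<ge> 0" using sm_le_sM sm_pos by linarith
    have c0: "cc \<delta> sminM \<ge> 0" using d0 sm_pos by (simp add: cc_def)
    have dt0: "cdt \<rho> smaxM \<ge> 0" using rho by (simp add: cdt_def)
    have Wdef: "wbar mf Dw = \<nu> / (sqrt 2 * mf) + sqrt 2 * \<nu>"
      using mf_pos by (simp add: wbar_def \<nu>_def)
    have yb: "ynoise \<kappa> \<rho> mf Mf smaxP smaxM sminM Dw \<ge> 2 * cb \<delta> / sqrt mf * wbar mf Dw"
    proof -
      have "0 \<le> cc \<delta> sminM * smaxM * sqrt \<rho> * norm Dw" using c0 sM0 rho by simp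
      moreover have "0 \<le> cc \<delta> sminM * cdt \<rho> smaxM / sqrt mf * norm Dw" using c0 dt0 mf_pos by simp
      ultimately show ?thesis by (simp add: ynoise_def Let_def \<delta>_def)
    qed
    have rb: "rnoise \<kappa> \<rho> mf Mf smaxP smaxM sminM Dw \<ge> sqrt 2 * cb \<delta> / mf * wbar mf Dw * \<nu>
        + cb \<delta> * (wbar mf Dw)\<^sup>2 + cb \<delta> / (2 * mf\<^sup>2) * \<nu>\<^sup>2 - ce \<delta> \<rho> sminM * \<nu>\<^sup>2"
    proof -
      have "0 \<le> sqrt 2 * cc \<delta> sminM * cdt \<rho> smaxM / mf * (norm Dw)\<^sup>2" using c0 dt0 mf_pos by simp
      then show ?thesis by (simp add: rnoise_def Let_def \<delta>_def \<nu>_def)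
    qed
    have G10: "G1 \<ge> 0" using rho by (simp add: G1_def Gnorm_nonneg)
    have u0: "u \<ge> 0" using rho by (simp add: u_def Gnorm_nonneg)
    have "G1\<^sup>2 \<le> (2 * mf + 1) / (2 * mf * (1 + \<delta>)) * u\<^sup>2 + ynoise \<kappa> \<rho> mf Mf smaxP smaxM sminM Dw * u
              + rnoise \<kappa> \<rho> mf Mf smaxP smaxM sminM Dw"
      by (rule final_num[OF mf_pos d0 dle1 u0 _ G10 _ _ Wdef yb rb E0b])
         (use cr nn in \<open>simp_all add: \<nu>_def cb_def\<close>)
    then show ?thesis by (simp add: G1_def u_def Zs_def Dw_def ca_def)
  qed
  show ?thesis
    using main
    by (simp add: Let_def smaxP_def smaxM_def sminM_def mf_def Mf_def \<delta>_def Xs_def)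
qed


end
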